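(* Let $(\underline{\mathbf{v}},\underline{\boldsymbol{\rho}})$ be a subsolution and $(\overline{\mathbf{v}},\overline{\boldsymbol{\rho}})$ a supersolution of the system described in the context, both locally bounded in time, and assume that for all $j\in\mathbb{Z}$, $\underline{v}_j(0,x)\le\overline{v}_j(0,x)$ for all $x\in[0,1]$ and $\underline{\rho}_j(0)\le\overline{\rho}_j(0)$. Then $\underline{v}_j(t,x)\le\overline{v}_j(t,x)$ and $\underline{\rho}_j(t)\le\overline{\rho}_j(t)$ for all $t>0$, $x\in[0,1]$, $j\in\mathbb{Z}$. If furthermore $\underline{\mathbf{v}}(0)\not\equiv\overline{\mathbf{v}}(0)$ or $\underline{\boldsymbol{\rho}}(0)\not\equiv\overline{\boldsymbol{\rho}}(0)$, then $\underline{v}_j(t,x)<\overline{v}_j(t,x)$ and $\underline{\rho}_j(t)<\overline{\rho}_j(t)$ for all $t>0$, $x\in[0,1]$, $j\in\mathbb{Z}$.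
   Context: Fix $\alpha,\beta,d>0$ and $f\in\mathscr{C}^1([0,1])$ with $f(0)=f(1)=0$, $0<f(u)\le f'(0)u$ on $(0,1)$, extended to a locally Lipschitz function on $\mathbb{R}$ negative on $\mathbb{R}\setminus[0,1]$. A pair $(\mathbf{v},\boldsymbol{\rho})=(v_j,\rho_j)_{j\in\mathbb{Z}}$ is in the regularity class if for every $j$: $\rho_j\in\mathscr{C}^1([0,+\infty))$, $v_j\in\mathscr{C}^0([0,+\infty)\times[0,1])$, $\partial_tv_j,\partial_x^2v_j\in\mathscr{C}^0((0,+\infty)\times(0,1))$, $\partial_xv_j\in\mathscr{C}^0((0,+\infty)\times[0,1])$. Such a pair $(\overline{\mathbf{v}},\overline{\boldsymbol{\rho}})$ is a supersolution if for all $t>0$, $j\in\mathbb{Z}$: $\partial_t\overline{v}_j\ge d\,\partial_x^2\overline{v}_j$ on $(0,1)$; $\overline{\rho}_j'(t)\ge f(\overline{\rho}_j(t))+\alpha(\overline{v}_j(t,0)+\overline{v}_{j-1}(t,1))-2\beta\overline{\rho}_j(t)$; $-d\,\partial_x\overline{v}_j(t,0)+\alpha\overline{v}_j(t,0)\ge\beta\overline{\rho}_j(t)$; $d\,\partial_x\overline{v}_j(t,1)+\alpha\overline{v}_j(t,1)\ge\beta\overline{\rho}_{j+1}(t)$. A subsolution is defined in the same way with all these inequalities reversed. Locally bounded in time means that for every $T>0$, $\sup_{t\in[0,T],\,j\in\mathbb{Z},\,x\in[0,1]}(|v_j(t,x)|+|\rho_j(t)|)<\infty$. *)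

theory Defs
  imports "HOL-Analysis.Analysis"
begin

(* A pair (v, rho): v j t x = v_j(t,x), rho j t = rho_j(t), for j :: int. *)
definition reg_derivs ::
  "(int \<Rightarrow> real \<Rightarrow> real \<Rightarrow> real) \<Rightarrow> (int \<Rightarrow> real \<Rightarrow> real) \<Rightarrow>
   (int \<Rightarrow> real \<Rightarrow> real \<Rightarrow> real) \<Rightarrow> (int \<Rightarrow> real \<Rightarrow> real \<Rightarrow> real) \<Rightarrow>
   (int \<Rightarrow> real \<Rightarrow> real \<Rightarrow> real) \<Rightarrow> (int \<Rightarrow> real \<Rightarrow> real) \<Rightarrow> bool" where
  "reg_derivs v rho vt vx vxx drho \<longleftrightarrow>
    (\<forall>j. continuous_on {0..} (drho j) \<and>
         (\<forall>t\<ge>0. (rho j has_real_derivative drho j t) (at t within {0..}))) \<and>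
    (\<forall>j. continuous_on ({0..} \<times> {0..1}) (\<lambda>(t,x). v j t x)) \<and>
    (\<forall>j. continuous_on ({0<..} \<times> {0<..<1}) (\<lambda>(t,x). vt j t x) \<and>
         (\<forall>t>0. \<forall>x\<in>{0<..<1}. ((\<lambda>s. v j s x) has_real_derivative vt j t x) (at t))) \<and>
    (\<forall>j. continuous_on ({0<..} \<times> {0..1}) (\<lambda>(t,x). vx j t x) \<and>
         (\<forall>t>0. \<forall>x\<in>{0..1}. ((\<lambda>y. v j t y) has_real_derivative vx j t x) (at x within {0..1}))) \<and>
    (\<forall>j. continuous_on ({0<..} \<times> {0<..<1}) (\<lambda>(t,x). vxx j t x) \<and>
         (\<forall>t>0. \<forall>x\<in>{0<..<1}. ((\<lambda>y. vx j t y) has_real_derivative vxx j t x) (at x)))"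

definition regularity_class ::
  "(int \<Rightarrow> real \<Rightarrow> real \<Rightarrow> real) \<Rightarrow> (int \<Rightarrow> real \<Rightarrow> real) \<Rightarrow> bool" where
  "regularity_class v rho \<longleftrightarrow> (\<exists>vt vx vxx drho. reg_derivs v rho vt vx vxx drho)"

definition supersolution ::
  "real \<Rightarrow> real \<Rightarrow> real \<Rightarrow> (real \<Rightarrow> real) \<Rightarrow>
   (int \<Rightarrow> real \<Rightarrow> real \<Rightarrow> real) \<Rightarrow> (int \<Rightarrow> real \<Rightarrow> real) \<Rightarrow> bool" where
  "supersolution \<alpha> \<beta> d f v rho \<longleftrightarrow>
    (\<exists>vt vx vxx drho. reg_derivs v rho vt vx vxx drho \<and>
      (\<forall>t>0. \<forall>j.
         (\<forall>x\<in>{0<..<1}. vt j t x \<ge> d * vxx j t x) \<and>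
         drho j t \<ge> f (rho j t) + \<alpha> * (v j t 0 + v (j - 1) t 1) - 2 * \<beta> * rho j t \<and>
         - d * vx j t 0 + \<alpha> * v j t 0 \<ge> \<beta> * rho j t \<and>
         d * vx j t 1 + \<alpha> * v j t 1 \<ge> \<beta> * rho (j + 1) t))"

definition subsolution ::
  "real \<Rightarrow> real \<Rightarrow> real \<Rightarrow> (real \<Rightarrow> real) \<Rightarrow>
   (int \<Rightarrow> real \<Rightarrow> real \<Rightarrow> real) \<Rightarrow> (int \<Rightarrow> real \<Rightarrow> real) \<Rightarrow> bool" where
  "subsolution \<alpha> \<beta> d f v rho \<longleftrightarrow>
    (\<exists>vt vx vxx drho. reg_derivs v rho vt vx vxx drho \<and>
      (\<forall>t>0. \<forall>j.
         (\<forall>x\<in>{0<..<1}. vt j t x \<le> d * vxx j t x) \<and>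
         drho j t \<le> f (rho j t) + \<alpha> * (v j t 0 + v (j - 1) t 1) - 2 * \<beta> * rho j t \<and>
         - d * vx j t 0 + \<alpha> * v j t 0 \<le> \<beta> * rho j t \<and>
         d * vx j t 1 + \<alpha> * v j t 1 \<le> \<beta> * rho (j + 1) t))"

definition locally_bounded_in_time ::
  "(int \<Rightarrow> real \<Rightarrow> real \<Rightarrow> real) \<Rightarrow> (int \<Rightarrow> real \<Rightarrow> real) \<Rightarrow> bool" where
  "locally_bounded_in_time v rho \<longleftrightarrow>
    (\<forall>T>0. \<exists>M. \<forall>t\<in>{0..T}. \<forall>j. \<forall>x\<in>{0..1}. \<bar>v j t x\<bar> + \<bar>rho j t\<bar> \<le> M)"

end

theory Submission
  imports Defs
begin

lemma deriv_left_min: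
  fixes g :: "real \<Rightarrow> real"
  assumes "(g has_real_derivative D) (at t within S)" "{a..t} \<subseteq> S" "a < t"
    "\<forall>s\<in>{a..<t}. g s \<ge> g t"
  shows "D \<le> 0"
proof -
  have "(g has_real_derivative D) (at t within {a..t})"
    using DERIV_subset assms(1,2) by blast
  hence lim: "((\<lambda>y. (g y - g t) / (y - t)) \<longlongrightarrow> D) (at_left t)"
    using assms(3) by (simp add: has_field_derivative_iff at_within_Icc_at_left)
  have ev: "eventually (\<lambda>y. (g y - g t) / (y - t) \<le> 0) (at_left t)"
    using eventually_at_left_real[OF assms(3)]
  proof (rule eventually_mono)
    fix y assume "y \<in> {a<..<t}"
    then have "g y - g t \<ge> 0" "y - t < 0" using assms(4) by auto
    then show "(g y - g t) / (y - t) \<le> 0" by (simp add: divide_nonneg_neg)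
  qed
  show ?thesis using tendsto_upperbound[OF lim ev] by simp
qed

lemma deriv_endpoint_left:
  fixes h :: "real \<Rightarrow> real"
  assumes "(h has_real_derivative D) (at 0 within {0..1})" "\<forall>y\<in>{0..1}. h y \<ge> h 0"
  shows "D \<ge> 0"
proof -
  have lim: "((\<lambda>y. (h y - h 0) / (y - 0)) \<longlongrightarrow> D) (at_right 0)"
    using assms(1) by (simp add: has_field_derivative_iff at_within_Icc_at_right)
  have ev: "eventually (\<lambda>y. (h y - h 0) / (y - 0) \<ge> 0) (at_right 0)"
  proof -
    have "eventually (\<lambda>y. y \<in> {0<..<1}) (at_right (0::real))"
      by (rule eventually_at_right_real) simp
    then show ?thesis
    proof (rule eventually_mono)
      fix y :: real assume "y \<in> {0<..<1}"
      then show "(h y - h 0) / (y - 0) \<ge> 0" using assms(2) by auto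
    qed
  qed
  show ?thesis using tendsto_lowerbound[OF lim ev] by simp
qed

lemma deriv_endpoint_right:
  fixes h :: "real \<Rightarrow> real"
  assumes "(h has_real_derivative D) (at 1 within {0..1})" "\<forall>y\<in>{0..1}. h y \<ge> h 1"
  shows "D \<le> 0"
proof -
  have lim: "((\<lambda>y. (h y - h 1) / (y - 1)) \<longlongrightarrow> D) (at_left 1)"
    using assms(1) by (simp add: has_field_derivative_iff at_within_Icc_at_left)
  have ev: "eventually (\<lambda>y. (h y - h 1) / (y - 1) \<le> 0) (at_left 1)"
  proof -
    have "eventually (\<lambda>y. y \<in> {0<..<1}) (at_left (1::real))"
      by (rule eventually_at_left_real) simp
    then show ?thesis
    proof (rule eventually_mono)
      fix y :: real assume "y \<in> {0<..<1}"
      then have "h y - h 1 \<ge> 0" "y - 1 < 0" using assms(2) by auto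
      then show "(h y - h 1) / (y - 1) \<le> 0" by (simp add: divide_nonneg_neg)
    qed
  qed
  show ?thesis using tendsto_upperbound[OF lim ev] by simp
qed

lemma interior_min_second:
  fixes h h' :: "real \<Rightarrow> real"
  assumes x: "x \<in> {0<..<1}" and mn: "\<forall>y\<in>{0..1}. h y \<ge> h x"
    and dh: "\<forall>y\<in>{0<..<1}. (h has_real_derivative h' y) (at y within {0..1})"
    and dh': "(h' has_real_derivative D) (at x)"
  shows "D \<ge> 0"
proof (rule ccontr)
  assume "\<not> D \<ge> 0" hence Dn: "D < 0" by simp
  have dh2: "\<And>y. y\<in>{0<..<1} \<Longrightarrow> (h has_real_derivative h' y) (at y)"
    using dh by (metis at_within_Icc_at greaterThanLessThan_iff)
  have "h' x = 0"
  proof (rule DERIV_local_min[OF dh2[OF x]])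
    show "0 < min x (1 - x)" using x by simp
    show "\<forall>y. \<bar>x - y\<bar> < min x (1 - x) \<longrightarrow> h x \<le> h y"
    proof (intro allI impI)
      fix y assume "\<bar>x - y\<bar> < min x (1 - x)"
      then have "y \<in> {0..1}" by (auto simp: abs_if split: if_splits)
      then show "h x \<le> h y" using mn by auto
    qed
  qed
  obtain e where e: "e > 0" "\<forall>k>0. k < e \<longrightarrow> h' x > h' (x + k)"
    using DERIV_neg_dec_right[OF dh' Dn] by blast
  define m where "m = min e (1 - x)"
  define y where "y = x + m / 2"
  have m1: "m > 0" "m \<le> 1 - x" "m \<le> e" using x e by (auto simp: m_def)
  have xy1: "x < y" unfolding y_def using m1 by linarith
  have xy2: "y < 1" unfolding y_def using m1 by linarith
  note xy = xy1 xy2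
  obtain z where z: "x < z" "z < y" "h y - h x = (y - x) * h' z"
    using MVT2[OF xy(1), of h h'] dh2 x xy by force
  have "h' z < 0" using e(2)[rule_format, of "z - x"] z \<open>h' x = 0\<close> xy m1 by (auto simp: y_def)
  hence "(y - x) * h' z < 0" using xy by (simp add: mult_pos_neg)
  hence "h y < h x" using z by linarith
  moreover have "h x \<le> h y" using mn xy x by auto
  ultimately show False by linarith
qed

lemma first_touch:
  fixes F :: "(real \<Rightarrow> real \<Rightarrow> real) set" and t0 T :: real
  assumes fin: "finite F" and tT: "t0 \<le> T"
    and cont: "\<forall>Z\<in>F. continuous_on ({t0..T} \<times> {0..1}) (\<lambda>(t,x). Z t x)"
    and init: "\<forall>Z\<in>F. \<forall>x\<in>{0..1}. Z t0 x > 0"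
    and bad: "\<exists>Z\<in>F. \<exists>t\<in>{t0..T}. \<exists>x\<in>{0..1}. Z t x \<le> 0"
  shows "\<exists>t\<in>{t0<..T}. (\<exists>Z\<in>F. \<exists>x\<in>{0..1}. Z t x = 0) \<and> (\<forall>Z\<in>F. \<forall>x\<in>{0..1}. Z t x \<ge> 0)
           \<and> (\<forall>Z\<in>F. \<forall>s\<in>{t0..<t}. \<forall>x\<in>{0..1}. Z s x > 0)"
proof -
  define R where "R = {t0..T} \<times> {0..(1::real)}"
  define P where "P Z = {p\<in>R. Z (fst p) (snd p) \<le> 0}" for Z :: "real \<Rightarrow> real \<Rightarrow> real"
  define B where "B = {t\<in>{t0..T}. \<exists>Z\<in>F. \<exists>x\<in>{0..1}. Z t x \<le> 0}"
  have cR: "compact R" unfolding R_def by (intro compact_Times compact_Icc)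
  have cP: "compact (P Z)" if "Z \<in> F" for Z
  proof -
    have co: "continuous_on R (\<lambda>p. Z (fst p) (snd p))"
      using cont that unfolding R_def by (simp add: case_prod_beta')
    have "closed (R \<inter> (\<lambda>p. Z (fst p) (snd p)) -` {..0})"
      by (rule continuous_closed_preimage[OF co]) (auto simp: R_def intro: closed_Times)
    moreover have "P Z = (R \<inter> (\<lambda>p. Z (fst p) (snd p)) -` {..0}) \<inter> R"
      unfolding P_def by auto
    ultimately show ?thesis using cR by (simp add: closed_Int_compact)
  qed
  have Beq: "B = (\<Union>Z\<in>F. fst ` P Z)"
    unfolding B_def P_def R_def by force
  have cB: "compact B" unfolding Beq
    using cP fin by (intro compact_UN) (auto intro!: compact_continuous_image continuous_on_fst continuous_on_id)
  have Bne: "B \<noteq> {}" using bad unfolding B_def by blast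
  obtain ts where ts: "ts \<in> B" "\<forall>y\<in>B. ts \<le> y"
    using compact_attains_inf[OF cB Bne] by blast
  obtain Z0 x0 where Z0: "Z0 \<in> F" "x0 \<in> {0..1}" "Z0 ts x0 \<le> 0" and tsI: "ts \<in> {t0..T}"
    using ts(1) unfolding B_def by blast
  have "ts \<noteq> t0" using init Z0 by force
  hence tsgt: "t0 < ts" using tsI by simp
  have before: "\<forall>Z\<in>F. \<forall>s\<in>{t0..<ts}. \<forall>x\<in>{0..1}. Z s x > 0"
  proof (intro ballI)
    fix Z s x assume "Z \<in> F" "s \<in> {t0..<ts}" "x \<in> {(0::real)..1}"
    hence "s \<notin> B" using ts(2) by force
    moreover have "s \<in> {t0..T}" using \<open>s \<in> {t0..<ts}\<close> tsI by auto
    ultimately have "\<not> Z s x \<le> 0" using \<open>Z \<in> F\<close> \<open>x \<in> {0..1}\<close> unfolding B_def by blast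
    thus "Z s x > 0" by simp
  qed
  have at: "\<forall>Z\<in>F. \<forall>x\<in>{0..1}. Z ts x \<ge> 0"
  proof (intro ballI)
    fix Z x assume ZF: "Z \<in> F" and x: "x \<in> {(0::real)..1}"
    have "continuous_on {t0..T} (\<lambda>s. Z s x)"
    proof -
      have "continuous_on {t0..T} ((\<lambda>(t,x). Z t x) \<circ> (\<lambda>s. (s, x)))"
        using x by (intro continuous_on_compose) (auto intro!: continuous_intros continuous_on_subset[OF cont[rule_format, OF ZF]])
      thus ?thesis by (simp add: o_def)
    qed
    hence "continuous_on {t0..ts} (\<lambda>s. Z s x)"
      by (rule continuous_on_subset) (use tsI in auto)
    hence "((\<lambda>s. Z s x) \<longlongrightarrow> Z ts x) (at ts within {t0..ts})"
      using tsgt by (simp add: continuous_on_def)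
    hence lim: "((\<lambda>s. Z s x) \<longlongrightarrow> Z ts x) (at_left ts)"
      using tsgt by (simp add: at_within_Icc_at_left)
    have "eventually (\<lambda>s. s \<in> {t0<..<ts}) (at_left ts)"
      by (rule eventually_at_left_real[OF tsgt])
    hence ev: "eventually (\<lambda>s. Z s x \<ge> 0) (at_left ts)"
    proof (rule eventually_mono)
      fix s assume "s \<in> {t0<..<ts}"
      hence "s \<in> {t0..<ts}" by auto
      thus "Z s x \<ge> 0" using before ZF x by (meson less_imp_le)
    qed
    show "Z ts x \<ge> 0" using tendsto_lowerbound[OF lim ev] by simp
  qed
  have "Z0 ts x0 = 0" using at Z0 by force
  hence "\<exists>Z\<in>F. \<exists>x\<in>{0..1}. Z ts x = 0" using Z0 by blast
  moreover have "ts \<in> {t0<..T}" using tsgt tsI by auto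
  ultimately show ?thesis using at before by blast
qed

definition HS :: "real \<Rightarrow> real \<Rightarrow> (real \<Rightarrow> real \<Rightarrow> real) \<Rightarrow> (real \<Rightarrow> real \<Rightarrow> real) \<Rightarrow>
   (real \<Rightarrow> real \<Rightarrow> real) \<Rightarrow> (real \<Rightarrow> real \<Rightarrow> real) \<Rightarrow> real \<Rightarrow> bool" where
  "HS d \<alpha> w wt wx wxx t0 \<longleftrightarrow> continuous_on ({t0..} \<times> {0..1}) (\<lambda>(t,x). w t x) \<and>
    (\<forall>t>t0. \<forall>x\<in>{0<..<1}. ((\<lambda>s. w s x) has_real_derivative wt t x) (at t)) \<and>
    (\<forall>t>t0. \<forall>x\<in>{0..1}. (w t has_real_derivative wx t x) (at x within {0..1})) \<and>
    (\<forall>t>t0. \<forall>x\<in>{0<..<1}. (wx t has_real_derivative wxx t x) (at x)) \<and>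
    (\<forall>t>t0. \<forall>x\<in>{0<..<1}. wt t x \<ge> d * wxx t x) \<and>
    (\<forall>t>t0. -d * wx t 0 + \<alpha> * w t 0 \<ge> 0 \<and> d * wx t 1 + \<alpha> * w t 1 \<ge> 0)"

definition BS :: "real \<Rightarrow> real \<Rightarrow> (real \<Rightarrow> real \<Rightarrow> real) \<Rightarrow> (real \<Rightarrow> real \<Rightarrow> real) \<Rightarrow>
   (real \<Rightarrow> real \<Rightarrow> real) \<Rightarrow> (real \<Rightarrow> real \<Rightarrow> real) \<Rightarrow> real \<Rightarrow> real \<Rightarrow> bool" where
  "BS d \<alpha> P Pt Px Pxx t0 T \<longleftrightarrow> continuous_on ({t0..T} \<times> {0..1}) (\<lambda>(t,x). P t x) \<and>
    (\<forall>t\<in>{t0<..T}. \<forall>x\<in>{0<..<1}. ((\<lambda>s. P s x) has_real_derivative Pt t x) (at t)) \<and>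
    (\<forall>t\<in>{t0<..T}. \<forall>x\<in>{0..1}. (P t has_real_derivative Px t x) (at x within {0..1})) \<and>
    (\<forall>t\<in>{t0<..T}. \<forall>x\<in>{0<..<1}. (Px t has_real_derivative Pxx t x) (at x)) \<and>
    (\<forall>t\<in>{t0<..T}. \<forall>x\<in>{0<..<1}. Pt t x \<le> d * Pxx t x) \<and>
    (\<forall>t\<in>{t0<..T}. -d * Px t 0 + \<alpha> * P t 0 \<le> 0 \<and> d * Px t 1 + \<alpha> * P t 1 \<le> 0)"

lemma HS_mono: "HS d \<alpha> w wt wx wxx t0 \<Longrightarrow> t0 \<le> t1 \<Longrightarrow> HS d \<alpha> w wt wx wxx t1"
  unfolding HS_def by (auto elim: continuous_on_subset)

lemma barrier_compare:
  assumes hs: "HS d \<alpha> w wt wx wxx t0" and bs: "BS d \<alpha> P Pt Px Pxx t0 T"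
    and tT: "t0 \<le> T" and d: "d > 0" and a: "\<alpha> > 0"
    and init: "\<forall>x\<in>{0..1}. P t0 x \<le> w t0 x"
  shows "\<forall>t\<in>{t0..T}. \<forall>x\<in>{0..1}. P t x \<le> w t x"
proof -
  note H = hs[unfolded HS_def] and Bs = bs[unfolded BS_def]
  have key: "w t x - P t x + \<eta> * exp t > 0" if eta: "\<eta> > 0" and tx: "t \<in> {t0..T}" "x \<in> {0..1}" for \<eta> t x
  proof (rule ccontr)
    assume neg: "\<not> ?thesis"
    define Z where "Z = (\<lambda>t x. w t x - P t x + \<eta> * exp t)"
    have contw: "continuous_on ({t0..T} \<times> {0..1}) (\<lambda>p. w (fst p) (snd p))"
    proof -
      have "continuous_on ({t0..T} \<times> {0..1}) (\<lambda>(t,x). w t x)"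
        by (rule continuous_on_subset[OF H[THEN conjunct1]]) auto
      thus ?thesis by (simp add: case_prod_beta')
    qed
    have contP: "continuous_on ({t0..T} \<times> {0..1}) (\<lambda>p. P (fst p) (snd p))"
      using Bs[THEN conjunct1] by (simp add: case_prod_beta')
    have "continuous_on ({t0..T} \<times> {0..1}) (\<lambda>p. w (fst p) (snd p) - P (fst p) (snd p) + \<eta> * exp (fst p))"
      by (intro continuous_intros contw contP)
    hence contZ: "continuous_on ({t0..T} \<times> {0..1}) (\<lambda>(t,x). Z t x)"
      by (simp add: Z_def case_prod_beta')
    have initZ: "\<forall>x\<in>{0..1}. Z t0 x > 0" using init eta by (auto simp: Z_def intro: add_nonneg_pos)
    have "\<exists>Z'\<in>{Z}. \<exists>t\<in>{t0..T}. \<exists>x\<in>{0..1}. Z' t x \<le> 0" 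
    proof -
      have "Z t x \<le> 0" using neg by (simp add: Z_def)
      thus ?thesis using tx by blast
    qed
    from first_touch[of "{Z}" t0 T, OF _ tT _ _ this] contZ initZ
    obtain ts x0 where ts: "ts \<in> {t0<..T}" "x0 \<in> {0..1}" "Z ts x0 = 0"
      and ge: "\<forall>y\<in>{0..1}. Z ts y \<ge> 0" and bef: "\<forall>s\<in>{t0..<ts}. \<forall>y\<in>{0..1}. Z s y > 0"
      by auto
    have tpos: "ts > t0" using ts by auto
    have dZx: "(Z ts has_real_derivative (wx ts y - Px ts y)) (at y within {0..1})" if "y \<in> {0..1}" for y
    proof -
      have "((\<lambda>y. w ts y - P ts y + \<eta> * exp ts) has_real_derivative (wx ts y - Px ts y + 0)) (at y within {0..1})"
        using H Bs ts that tpos by (intro DERIV_add DERIV_diff DERIV_const) auto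
      thus ?thesis by (simp add: Z_def)
    qed
    show False
    proof (cases "x0 \<in> {0<..<1}")
      case True
      have dt: "((\<lambda>s. Z s x0) has_real_derivative (wt ts x0 - Pt ts x0 + \<eta> * exp ts)) (at ts)"
        unfolding Z_def using H Bs ts True tpos
        by (intro DERIV_add DERIV_diff DERIV_cmult DERIV_exp) auto
      have "wt ts x0 - Pt ts x0 + \<eta> * exp ts \<le> 0"
      proof (rule deriv_left_min[OF dt, of t0])
        show "{t0..ts} \<subseteq> UNIV" by simp
        show "t0 < ts" by (rule tpos)
        show "\<forall>s\<in>{t0..<ts}. Z s x0 \<ge> Z ts x0" using bef ts True by (auto intro: less_imp_le)
      qed
      moreover have "wxx ts x0 - Pxx ts x0 \<ge> 0"
      proof (rule interior_min_second[OF True, of "Z ts" "\<lambda>y. wx ts y - Px ts y"])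
        show "\<forall>y\<in>{0..1}. Z ts x0 \<le> Z ts y" using ge ts by auto
        show "\<forall>y\<in>{0<..<1}. (Z ts has_real_derivative wx ts y - Px ts y) (at y within {0..1})"
          using dZx by auto
        show "((\<lambda>y. wx ts y - Px ts y) has_real_derivative wxx ts x0 - Pxx ts x0) (at x0)"
          using H Bs ts True tpos by (intro DERIV_diff) auto
      qed
      moreover have "wt ts x0 \<ge> d * wxx ts x0" "Pt ts x0 \<le> d * Pxx ts x0"
        using H Bs ts True tpos by auto
      moreover have "\<eta> * exp ts > 0" using eta by simp
      ultimately have "d * (wxx ts x0 - Pxx ts x0) < 0" by (simp add: algebra_simps)
      moreover have "d * (wxx ts x0 - Pxx ts x0) \<ge> 0"
        using d \<open>wxx ts x0 - Pxx ts x0 \<ge> 0\<close> by simp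
      ultimately show False by linarith
    next
      case False
      hence "x0 = 0 \<or> x0 = 1" using ts by auto
      thus False
      proof
        assume x00: "x0 = 0"
        have "wx ts 0 - Px ts 0 \<ge> 0"
          by (rule deriv_endpoint_left[OF dZx]) (use ge ts x00 in auto)
        moreover have "-d * wx ts 0 + \<alpha> * w ts 0 \<ge> 0" "-d * Px ts 0 + \<alpha> * P ts 0 \<le> 0"
          using H Bs ts tpos by auto
        moreover have "w ts 0 - P ts 0 = - \<eta> * exp ts" using ts x00 by (simp add: Z_def)
        hence "\<alpha> * (w ts 0 - P ts 0) = \<alpha> * (- \<eta> * exp ts)" by simp
        hence "\<alpha> * w ts 0 = \<alpha> * P ts 0 - \<alpha> * (\<eta> * exp ts)" by (simp add: algebra_simps)
        moreover have "\<alpha> * (\<eta> * exp ts) > 0" using a eta by simp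
        ultimately have "d * wx ts 0 < d * Px ts 0" by linarith
        hence "d * (wx ts 0 - Px ts 0) < 0" by (simp add: algebra_simps)
        moreover have "d * (wx ts 0 - Px ts 0) \<ge> 0" using d \<open>wx ts 0 - Px ts 0 \<ge> 0\<close> by simp
        ultimately show False by linarith
      next
        assume x01: "x0 = 1"
        have "wx ts 1 - Px ts 1 \<le> 0"
          by (rule deriv_endpoint_right[OF dZx]) (use ge ts x01 in auto)
        moreover have "d * wx ts 1 + \<alpha> * w ts 1 \<ge> 0" "d * Px ts 1 + \<alpha> * P ts 1 \<le> 0"
          using H Bs ts tpos by auto
        moreover have "w ts 1 - P ts 1 = - \<eta> * exp ts" using ts x01 by (simp add: Z_def)
        hence "\<alpha> * (w ts 1 - P ts 1) = \<alpha> * (- \<eta> * exp ts)" by simp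
        hence "\<alpha> * w ts 1 = \<alpha> * P ts 1 - \<alpha> * (\<eta> * exp ts)" by (simp add: algebra_simps)
        moreover have "\<alpha> * (\<eta> * exp ts) > 0" using a eta by simp
        ultimately have "d * wx ts 1 > d * Px ts 1" by linarith
        hence "d * (wx ts 1 - Px ts 1) > 0" by (simp add: algebra_simps)
        moreover have "d * (wx ts 1 - Px ts 1) \<le> 0" using d \<open>wx ts 1 - Px ts 1 \<le> 0\<close>
          by (simp add: mult_nonneg_nonpos)
        ultimately show False by linarith
      qed
    qed
  qed
  show ?thesis
  proof (intro ballI)
    fix t x assume tx: "t \<in> {t0..T}" "x \<in> {(0::real)..1}"
    show "P t x \<le> w t x"
    proof (rule ccontr)
      assume "\<not> P t x \<le> w t x"
      define \<eta> where "\<eta> = (P t x - w t x) / (2 * exp t)"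
      have "\<eta> > 0" using \<open>\<not> P t x \<le> w t x\<close> by (simp add: \<eta>_def)
      from key[OF this tx] have "w t x - P t x + \<eta> * exp t > 0" .
      moreover have "\<eta> * exp t = (P t x - w t x) / 2" by (simp add: \<eta>_def)
      ultimately show False using \<open>\<not> P t x \<le> w t x\<close> by argo
    qed
  qed
qed

lemma forward_pos:
  assumes hs: "HS d \<alpha> w wt wx wxx t1" and d: "d > 0" and a: "\<alpha> > 0"
    and pos: "\<forall>x\<in>{0..1}. w t1 x > 0"
  shows "\<forall>t\<ge>t1. \<forall>x\<in>{0..1}. w t x > 0"
proof -
  note H = hs[unfolded HS_def]
  have c1: "continuous_on {0..1} (w t1)"
  proof -
    have "continuous_on {0..1} ((\<lambda>(t,x). w t x) \<circ> (\<lambda>x. (t1, x)))"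
      by (intro continuous_on_compose continuous_intros continuous_on_subset[OF H[THEN conjunct1]]) auto
    thus ?thesis by (simp add: o_def)
  qed
  obtain xm where xm: "xm \<in> {0..1}" "\<forall>y\<in>{0..1}. w t1 xm \<le> w t1 y"
    using continuous_attains_inf[OF compact_Icc _ c1] by fastforce
  define m1 where "m1 = w t1 xm"
  have m1: "m1 > 0" using pos xm by (simp add: m1_def)
  define A where "A = 4 * \<alpha> / (4 * d + \<alpha>)"
  have A0: "A > 0" using a d by (simp add: A_def)
  have A4: "A < 4" using a d by (simp add: A_def field_simps)
  have key: "\<alpha> * (1 - A / 4) = A * d" using a d by (simp add: A_def field_simps)
  define P where "P = (\<lambda>t x. m1 * exp (-2 * \<alpha> * (t - t1)) * (1 - A * (x - 1/2)^2))"
  define Pt where "Pt = (\<lambda>t x. -2 * \<alpha> * P t x)"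
  define Px where "Px = (\<lambda>t x. m1 * exp (-2 * \<alpha> * (t - t1)) * (- 2 * A * (x - 1/2)))"
  define Pxx where "Pxx = (\<lambda>(t::real) (x::real). m1 * exp (-2 * \<alpha> * (t - t1)) * (- 2 * A))"
  have phi: "1 - A * (x - 1/2)^2 \<ge> 1 - A / 4" if "x \<in> {0..1}" for x :: real
  proof -
    have "x * x \<le> x" using that by (simp add: mult_left_le)
    hence "(x - 1/2)^2 \<le> 1/4" by (simp add: power2_eq_square algebra_simps)
    hence "A * (x - 1/2)^2 \<le> A * (1/4)" using A0 by (intro mult_left_mono) auto
    thus ?thesis by simp
  qed
  have phi1: "1 - A * (x - 1/2)^2 \<le> 1" for x :: real using A0 by simp
  show ?thesis
  proof (intro allI impI ballI)
    fix t x assume t: "t \<ge> t1" and x: "x \<in> {(0::real)..1}"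
    have bs: "BS d \<alpha> P Pt Px Pxx t1 t"
      unfolding BS_def
    proof (intro conjI ballI)
      show "continuous_on ({t1..t} \<times> {0..1}) (\<lambda>(t, x). P t x)"
        unfolding P_def case_prod_beta' by (intro continuous_intros)
    next
      fix s y assume "s \<in> {t1<..t}" "y \<in> {(0::real)<..<1}"
      show "((\<lambda>s. P s y) has_real_derivative Pt s y) (at s)"
        unfolding P_def Pt_def by (auto intro!: derivative_eq_intros simp: algebra_simps)
    next
      fix s y assume "s \<in> {t1<..t}" "y \<in> {(0::real)..1}"
      have "(P s has_real_derivative Px s y) (at y)"
        unfolding P_def Px_def by (auto intro!: derivative_eq_intros simp: algebra_simps power2_eq_square)
      thus "(P s has_real_derivative Px s y) (at y within {0..1})"
        by (rule has_field_derivative_at_within)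
    next
      fix s y assume "s \<in> {t1<..t}" "y \<in> {(0::real)<..<1}"
      show "(Px s has_real_derivative Pxx s y) (at y)"
        unfolding Px_def Pxx_def by (auto intro!: derivative_eq_intros simp: algebra_simps)
    next
      fix s y assume "s \<in> {t1<..t}" "y \<in> {(0::real)<..<1}"
      define E where "E = m1 * exp (-2 * \<alpha> * (s - t1))"
      have E0: "E > 0" using m1 by (simp add: E_def)
      have "1 - A * (y - 1/2)^2 \<ge> 1 - A / 4" using phi[of y] \<open>y \<in> _\<close> by auto
      hence "\<alpha> * (1 - A * (y - 1/2)^2) \<ge> \<alpha> * (1 - A / 4)" using a by (intro mult_left_mono) auto
      hence "\<alpha> * (1 - A * (y - 1/2)^2) \<ge> A * d" using key by simp
      hence "E * (\<alpha> * (1 - A * (y - 1/2)^2)) \<ge> E * (A * d)" using E0 by (simp add: mult_left_mono)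
      thus "Pt s y \<le> d * Pxx s y"
        unfolding Pt_def Pxx_def P_def E_def[symmetric] by (simp add: algebra_simps)
    next
      fix s assume "s \<in> {t1<..t}"
      define E where "E = m1 * exp (-2 * \<alpha> * (s - t1))"
      show "- d * Px s 0 + \<alpha> * P s 0 \<le> 0"
      proof -
        have p0: "P s 0 = E * (1 - A / 4)" by (simp add: P_def E_def power2_eq_square)
        have px0: "Px s 0 = E * A" by (simp add: Px_def E_def)
        have "\<alpha> * P s 0 = E * (A * d)" using p0 key by (metis mult.left_commute)
        moreover have "d * Px s 0 = E * (A * d)" using px0 by (simp add: ac_simps)
        ultimately show ?thesis by linarith
      qed
    next
      fix s assume "s \<in> {t1<..t}"
      define E where "E = m1 * exp (-2 * \<alpha> * (s - t1))"
      show "d * Px s 1 + \<alpha> * P s 1 \<le> 0"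
      proof -
        have p0: "P s 1 = E * (1 - A / 4)" by (simp add: P_def E_def power2_eq_square)
        have px0: "Px s 1 = - (E * A)" by (simp add: Px_def E_def)
        have "\<alpha> * P s 1 = E * (A * d)" using p0 key by (metis mult.left_commute)
        moreover have "d * Px s 1 = - (E * (A * d))" using px0 by (simp add: ac_simps)
        ultimately show ?thesis by linarith
      qed
    qed
    have init: "\<forall>y\<in>{0..1}. P t1 y \<le> w t1 y"
    proof
      fix y :: real assume y: "y \<in> {0..1}"
      have "P t1 y = m1 * (1 - A * (y - 1/2)^2)" by (simp add: P_def)
      also have "\<dots> \<le> m1" using phi1[of y] m1 by (simp add: mult_left_le)
      also have "\<dots> \<le> w t1 y" using xm y by (simp add: m1_def)
      finally show "P t1 y \<le> w t1 y" .
    qed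
    have "P t x \<le> w t x"
      using barrier_compare[OF hs bs t d a init] t x by auto
    moreover have "P t x > 0"
      unfolding P_def using m1 phi[OF x] A4 by (intro mult_pos_pos) auto
    ultimately show "w t x > 0" by linarith
  qed
qed

lemma start_pos_local:
  assumes hs: "HS d \<alpha> w wt wx wxx t0" and d: "d > 0" and a: "\<alpha> > 0"
    and r: "r > 0" "x0 - r \<ge> 0" "x0 + r \<le> 1" and dl: "\<delta> > 0"
    and initb: "\<forall>x\<in>{0..1}. \<bar>x - x0\<bar> \<le> r \<longrightarrow> w t0 x \<ge> \<delta>"
    and init0: "\<forall>x\<in>{0..1}. w t0 x \<ge> 0"
    and s1: "0 < s1" "s1 < r^2 / (4 * d)" "s1 \<le> r / (4 * \<alpha>)"
  shows "\<forall>x\<in>{0..1}. w (t0 + s1) x > 0"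
proof -
  define \<tau> where "\<tau> = s1 * r^2 / 2"
  define lam where "lam = 1 / (2 * \<tau>)"
  define S where "S = (\<lambda>t::real. t - t0 + \<tau>)"
  define Ein where "Ein = (\<lambda>t x. -((x - x0)^2) / (4 * d * S t) - lam * S t)"
  define G where "G = (\<lambda>t x. exp (Ein t x))"
  define m where "m = exp (- (r^2) / (4 * d * \<tau>) - 1/2)"
  define P where "P = (\<lambda>t x. \<delta> * (G t x - m))"
  define Pt where "Pt = (\<lambda>t x. \<delta> * G t x * ((x - x0)^2 / (4 * d * (S t)^2) - lam))"
  define Px where "Px = (\<lambda>t x. \<delta> * G t x * (- (x - x0) / (2 * d * S t)))"
  define Pxx where "Pxx = (\<lambda>t x. \<delta> * G t x * ((x - x0)^2 / (4 * d^2 * (S t)^2) - 1 / (2 * d * S t)))"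
  define T where "T = t0 + s1"
  have r2: "r \<le> 1/2" using r by simp
  have r2b: "r^2 \<le> 1" using r r2 by (simp add: power_le_one)
  have tau0: "\<tau> > 0" using s1 r by (simp add: \<tau>_def)
  have taus1: "\<tau> \<le> s1"
  proof -
    have "s1 * r^2 \<le> s1 * 1" using r2b s1 by (intro mult_left_mono) auto
    thus ?thesis using s1 by (simp add: \<tau>_def)
  qed
  have lt: "lam * \<tau> = 1/2" using tau0 by (simp add: lam_def)
  have Spos: "S t > 0" if "t \<ge> t0" for t using that tau0 by (simp add: S_def)
  have Sge: "S t \<ge> \<tau>" if "t \<ge> t0" for t using that by (simp add: S_def)
  have Sle: "S t \<le> r / (2 * \<alpha>)" if "t \<le> T" for t
  proof -
    have "S t \<le> 2 * s1" using that taus1 by (simp add: S_def T_def)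
    also have "\<dots> \<le> 2 * (r / (4 * \<alpha>))" using s1 by simp
    finally show ?thesis by simp
  qed
  have Gpos: "G t x > 0" for t x by (simp add: G_def)
  have bs: "BS d \<alpha> P Pt Px Pxx t0 T"
    unfolding BS_def
  proof (intro conjI ballI)
    have "continuous_on ({t0..T} \<times> {0..1}) (\<lambda>p. \<delta> * (exp (-((snd p - x0)^2) / (4 * d * (fst p - t0 + \<tau>)) - lam * (fst p - t0 + \<tau>)) - m))"
      using tau0 d by (intro continuous_intros) (auto simp: add_pos_nonneg)
    thus "continuous_on ({t0..T} \<times> {0..1}) (\<lambda>(t, x). P t x)"
      by (simp add: P_def G_def Ein_def S_def case_prod_beta')
  next
    fix t y assume t: "t \<in> {t0<..T}" and y: "y \<in> {(0::real)<..<1}"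
    have St: "S t > 0" using Spos t by auto
    have dS: "((\<lambda>s. S s) has_real_derivative 1) (at t)"
      unfolding S_def by (auto intro!: derivative_eq_intros)
    have dE: "((\<lambda>s. Ein s y) has_real_derivative ((y - x0)^2 / (4 * d * (S t)^2) - lam)) (at t)"
      unfolding Ein_def using St d
      by (auto intro!: derivative_eq_intros dS simp: field_simps power2_eq_square)
    have "((\<lambda>s. \<delta> * (exp (Ein s y) - m)) has_real_derivative \<delta> * (exp (Ein t y) * ((y - x0)^2 / (4 * d * (S t)^2) - lam) - 0)) (at t)"
      by (auto intro!: derivative_eq_intros dE)
    thus "((\<lambda>s. P s y) has_real_derivative Pt t y) (at t)"
      by (simp add: P_def Pt_def G_def mult.assoc)
  next
    fix t y assume t: "t \<in> {t0<..T}" and y: "y \<in> {(0::real)..1}"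
    have St: "S t > 0" using Spos t by auto
    have dE: "((\<lambda>x. Ein t x) has_real_derivative (- (y - x0) / (2 * d * S t))) (at y)"
      unfolding Ein_def using St d
      by (auto intro!: derivative_eq_intros simp: field_simps power2_eq_square)
    have "((\<lambda>x. \<delta> * (exp (Ein t x) - m)) has_real_derivative \<delta> * (exp (Ein t y) * (- (y - x0) / (2 * d * S t)) - 0)) (at y)"
      by (auto intro!: derivative_eq_intros dE)
    hence "(P t has_real_derivative Px t y) (at y)"
      by (simp add: P_def Px_def G_def mult.assoc)
    thus "(P t has_real_derivative Px t y) (at y within {0..1})"
      by (rule has_field_derivative_at_within)
  next
    fix t y assume t: "t \<in> {t0<..T}" and y: "y \<in> {(0::real)<..<1}"
    have St: "S t > 0" using Spos t by auto
    have dE: "((\<lambda>x. Ein t x) has_real_derivative (- (y - x0) / (2 * d * S t))) (at y)"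
      unfolding Ein_def using St d
      by (auto intro!: derivative_eq_intros simp: field_simps power2_eq_square)
    have dG: "((\<lambda>x. G t x) has_real_derivative G t y * (- (y - x0) / (2 * d * S t))) (at y)"
      unfolding G_def by (rule DERIV_fun_exp[OF dE])
    have dL: "((\<lambda>x. - (x - x0) / (2 * d * S t)) has_real_derivative (- 1 / (2 * d * S t))) (at y)"
      using St d by (auto intro!: derivative_eq_intros simp: field_simps)
    have "((\<lambda>x. \<delta> * G t x * (- (x - x0) / (2 * d * S t))) has_real_derivative
        \<delta> * (G t y * (- (y - x0) / (2 * d * S t))) * (- (y - x0) / (2 * d * S t)) + (- 1 / (2 * d * S t)) * (\<delta> * G t y)) (at y)"
      by (intro DERIV_mult DERIV_cmult dG dL)
    moreover have "\<delta> * (G t y * (- (y - x0) / (2 * d * S t))) * (- (y - x0) / (2 * d * S t)) + (- 1 / (2 * d * S t)) * (\<delta> * G t y) = Pxx t y"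
      unfolding Pxx_def using St d by (simp add: field_simps power2_eq_square)
    ultimately show "(Px t has_real_derivative Pxx t y) (at y)"
      by (simp add: Px_def)
  next
    fix t y assume t: "t \<in> {t0<..T}" and y: "y \<in> {(0::real)<..<1}"
    have St: "S t > 0" using Spos t by auto
    have lam: "1 / (2 * S t) \<le> lam"
      using Sge[of t] t tau0 by (simp add: lam_def frac_le)
    have e1: "d * Pxx t y = \<delta> * G t y * ((y - x0)^2 / (4 * d * (S t)^2) - 1 / (2 * S t))"
      unfolding Pxx_def using St d by (simp add: field_simps power2_eq_square)
    have "(y - x0)^2 / (4 * d * (S t)^2) - lam \<le> (y - x0)^2 / (4 * d * (S t)^2) - 1 / (2 * S t)"
      using lam by simp
    hence "\<delta> * G t y * ((y - x0)^2 / (4 * d * (S t)^2) - lam) \<le> \<delta> * G t y * ((y - x0)^2 / (4 * d * (S t)^2) - 1 / (2 * S t))"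
      using dl Gpos[of t y] by (intro mult_left_mono) auto
    thus "Pt t y \<le> d * Pxx t y" using e1 by (simp add: Pt_def)
  next
    fix t assume t: "t \<in> {t0<..T}"
    have St: "S t > 0" using Spos t by auto
    have "S t \<le> x0 / (2 * \<alpha>)"
      using Sle[of t] t r a by (smt (verit) divide_right_mono greaterThanAtMost_iff zero_le_mult_iff)
    hence "2 * \<alpha> * S t \<le> x0" using a by (simp add: field_simps)
    hence c: "\<alpha> \<le> x0 / (2 * S t)" using St by (simp add: field_simps)
    have e: "- d * Px t 0 + \<alpha> * P t 0 = \<delta> * G t 0 * (\<alpha> - x0 / (2 * S t)) - \<alpha> * \<delta> * m"
      unfolding Px_def P_def using St d by (simp add: field_simps)
    have "\<delta> * G t 0 * (\<alpha> - x0 / (2 * S t)) \<le> 0"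
      using c dl Gpos[of t 0] by (simp add: mult_nonneg_nonpos)
    moreover have "\<alpha> * \<delta> * m \<ge> 0" using a dl by (simp add: m_def)
    ultimately show "- d * Px t 0 + \<alpha> * P t 0 \<le> 0" using e by linarith
  next
    fix t assume t: "t \<in> {t0<..T}"
    have St: "S t > 0" using Spos t by auto
    have "S t \<le> (1 - x0) / (2 * \<alpha>)"
      using Sle[of t] t r a by (smt (verit) divide_right_mono greaterThanAtMost_iff zero_le_mult_iff)
    hence "2 * \<alpha> * S t \<le> 1 - x0" using a by (simp add: field_simps)
    hence c: "\<alpha> \<le> (1 - x0) / (2 * S t)" using St by (simp add: field_simps)
    have e: "d * Px t 1 + \<alpha> * P t 1 = \<delta> * G t 1 * (\<alpha> - (1 - x0) / (2 * S t)) - \<alpha> * \<delta> * m"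
      unfolding Px_def P_def using St d by (simp add: field_simps)
    have "\<delta> * G t 1 * (\<alpha> - (1 - x0) / (2 * S t)) \<le> 0"
      using c dl Gpos[of t 1] by (simp add: mult_nonneg_nonpos)
    moreover have "\<alpha> * \<delta> * m \<ge> 0" using a dl by (simp add: m_def)
    ultimately show "d * Px t 1 + \<alpha> * P t 1 \<le> 0" using e by linarith
  qed
  have init: "\<forall>x\<in>{0..1}. P t0 x \<le> w t0 x"
  proof
    fix x :: real assume x: "x \<in> {0..1}"
    have G0: "G t0 x = exp (-((x - x0)^2) / (4 * d * \<tau>) - 1/2)"
      using lt by (simp add: G_def Ein_def S_def)
    show "P t0 x \<le> w t0 x"
    proof (cases "\<bar>x - x0\<bar> \<le> r")
      case True
      have "-((x - x0)^2) / (4 * d * \<tau>) \<le> 0" using d tau0 by (simp add: divide_nonpos_pos)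
      hence "-((x - x0)^2) / (4 * d * \<tau>) - 1/2 \<le> 0" by linarith
      hence "G t0 x \<le> 1" unfolding G0 by (subst exp_le_one_iff)
      moreover have "m > 0" by (simp add: m_def)
      ultimately have "G t0 x - m \<le> 1" by linarith
      hence "\<delta> * (G t0 x - m) \<le> \<delta> * 1" using dl by (intro mult_left_mono) auto
      hence "P t0 x \<le> \<delta>" by (simp add: P_def)
      thus ?thesis using initb x True by force
    next
      case False
      hence "r < \<bar>x - x0\<bar>" by simp
      hence "r^2 < \<bar>x - x0\<bar>^2" using r by (intro power_strict_mono) auto
      hence "(x - x0)^2 > r^2" by simp
      hence "(x - x0)^2 / (4 * d * \<tau>) > r^2 / (4 * d * \<tau>)" using d tau0 by (simp add: divide_strict_right_mono)
      hence "G t0 x < m" unfolding G0 m_def by simp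
      hence "P t0 x < 0" using dl by (simp add: P_def mult_pos_neg)
      thus ?thesis using init0 x by force
    qed
  qed
  have T0: "t0 \<le> T" using s1 by (simp add: T_def)
  have cmp: "\<forall>t\<in>{t0..T}. \<forall>x\<in>{0..1}. P t x \<le> w t x"
    by (rule barrier_compare[OF hs bs T0 d a init])
  show ?thesis
  proof
    fix x :: real assume x: "x \<in> {0..1}"
    have ST: "S T = s1 + \<tau>" by (simp add: S_def T_def)
    have STp: "S T > 0" using ST s1 tau0 by simp
    have sq: "(x - x0)^2 \<le> 1"
    proof -
      have "\<bar>x - x0\<bar> \<le> 1" using x r by auto
      hence "\<bar>x - x0\<bar>^2 \<le> 1" by (intro power_le_one) auto
      thus ?thesis by (simp only: power2_abs)
    qed
    have q1: "(x - x0)^2 / (4 * d * S T) \<le> 1 / (4 * d * s1)"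
    proof -
      have "(x - x0)^2 / (4 * d * S T) \<le> 1 / (4 * d * S T)" using sq d STp by (simp add: divide_right_mono)
      also have "\<dots> \<le> 1 / (4 * d * s1)" using d s1 ST tau0 by (simp add: frac_le)
      finally show ?thesis .
    qed
    have q2: "lam * S T = 1 / r^2 + 1/2"
      using ST s1 r by (simp add: lam_def \<tau>_def field_simps)
    have q3: "r^2 / (4 * d * \<tau>) = 1 / (2 * d * s1)"
      using s1 r d by (simp add: \<tau>_def field_simps)
    have q4: "1 / r^2 < 1 / (4 * d * s1)"
    proof -
      have "4 * d * s1 < r^2" using s1 d by (simp add: field_simps)
      thus ?thesis using d s1 by (simp add: frac_less2)
    qed
    have q5: "1 / (2 * d * s1) = 2 * (1 / (4 * d * s1))" by simp
    have "-((x - x0)^2) / (4 * d * S T) - lam * S T > - (r^2) / (4 * d * \<tau>) - 1/2"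
    proof -
      have e1: "-((x - x0)^2) / (4 * d * S T) = - ((x - x0)^2 / (4 * d * S T))" by simp
      have e2: "- (r^2) / (4 * d * \<tau>) = - (r^2 / (4 * d * \<tau>))" by simp
      show ?thesis unfolding e1 e2 using q1 q2 q3 q4 q5 by linarith
    qed
    hence "G T x > m" unfolding G_def Ein_def m_def by simp
    hence "P T x > 0" using dl by (simp add: P_def)
    moreover have "P T x \<le> w T x" using cmp T0 x by auto
    ultimately show "w (t0 + s1) x > 0" by (simp add: T_def)
  qed
qed

lemma start_pos:
  assumes hs: "HS d \<alpha> w wt wx wxx t0" and d: "d > 0" and a: "\<alpha> > 0"
    and nonneg: "\<forall>x\<in>{0..1}. w t0 x \<ge> 0" and ex: "\<exists>x\<in>{0..1}. w t0 x > 0"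
  shows "\<forall>t>t0. \<forall>x\<in>{0..1}. w t x > 0"
proof -
  note H = hs[unfolded HS_def]
  obtain x1 where x1: "x1 \<in> {0..1}" "w t0 x1 > 0" using ex by blast
  have c1: "continuous_on {0..1} (w t0)"
  proof -
    have "continuous_on {0..1} ((\<lambda>(t,x). w t x) \<circ> (\<lambda>x. (t0, x)))"
      by (intro continuous_on_compose continuous_intros continuous_on_subset[OF H[THEN conjunct1]]) auto
    thus ?thesis by (simp add: o_def)
  qed
  define \<delta> where "\<delta> = w t0 x1 / 2"
  have dl: "\<delta> > 0" using x1 by (simp add: \<delta>_def)
  obtain e where e: "e > 0" "\<forall>y\<in>{0..1}. dist y x1 < e \<longrightarrow> dist (w t0 y) (w t0 x1) < \<delta>"
    using c1 x1(1) dl unfolding continuous_on_iff by blast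
  define e' where "e' = min e (1/2)"
  have e': "e' > 0" "e' \<le> e" "e' \<le> 1/2" using e by (auto simp: e'_def)
  define r where "r = e' / 4"
  define x0 where "x0 = (if x1 \<le> 1/2 then x1 + e'/2 else x1 - e'/2)"
  have r0: "r > 0" using e' by (simp add: r_def)
  have x0r: "x0 - r \<ge> 0" "x0 + r \<le> 1" "\<bar>x0 - x1\<bar> = e'/2"
    using e' x1(1) by (auto simp: x0_def r_def)
  have initb: "\<forall>y\<in>{0..1}. \<bar>y - x0\<bar> \<le> r \<longrightarrow> w t0 y \<ge> \<delta>"
  proof (intro ballI impI)
    fix y :: real assume y: "y \<in> {0..1}" "\<bar>y - x0\<bar> \<le> r"
    have "\<bar>y - x1\<bar> \<le> \<bar>y - x0\<bar> + \<bar>x0 - x1\<bar>" by linarith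
    also have "\<dots> < e" using y(2) x0r(3) e' by (simp add: r_def)
    finally have "dist y x1 < e" by (simp add: dist_real_def)
    hence "\<bar>w t0 y - w t0 x1\<bar> < \<delta>" using e(2) y(1) by (simp add: dist_real_def)
    hence "w t0 x1 - w t0 y < \<delta>" by linarith
    thus "w t0 y \<ge> \<delta>" by (simp add: \<delta>_def)
  qed
  show ?thesis
  proof (intro allI impI ballI)
    fix t x assume t: "t > t0" and x: "x \<in> {(0::real)..1}"
    define s1 where "s1 = min (t - t0) (min (r^2 / (8 * d)) (r / (4 * \<alpha>)))"
    have s1p: "0 < s1" using t r0 d a by (simp add: s1_def)
    have s1a: "s1 < r^2 / (4 * d)"
    proof -
      have "s1 \<le> r^2 / (8 * d)" by (simp add: s1_def)
      also have "\<dots> < r^2 / (4 * d)" using r0 d by (simp add: frac_less2)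
      finally show ?thesis .
    qed
    have s1b: "s1 \<le> r / (4 * \<alpha>)" by (simp add: s1_def)
    have s1t: "t0 + s1 \<le> t" by (simp add: s1_def)
    have p1: "\<forall>x\<in>{0..1}. w (t0 + s1) x > 0"
      by (rule start_pos_local[OF hs d a r0 x0r(1,2) dl initb nonneg s1p s1a s1b])
    have hs1: "HS d \<alpha> w wt wx wxx (t0 + s1)" using HS_mono[OF hs] s1p by simp
    show "w t x > 0" using forward_pos[OF hs1 d a p1] s1t x by blast
  qed
qed

lemma part1_eps:
  fixes w wt wx wxx :: "int \<Rightarrow> real \<Rightarrow> real \<Rightarrow> real" and sg dsg Fr :: "int \<Rightarrow> real \<Rightarrow> real"
  assumes a: "\<alpha> > 0" and b: "\<beta> > 0" and d: "d > 0" and T: "T > 0" and L: "L \<ge> 0" and ep: "\<epsilon> > 0"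
    and W1: "\<forall>j. continuous_on ({0..T} \<times> {0..1}) (\<lambda>(t,x). w j t x)"
    and W2: "\<forall>j. \<forall>t\<in>{0<..T}. \<forall>x\<in>{0<..<1}. ((\<lambda>s. w j s x) has_real_derivative wt j t x) (at t)"
    and W3: "\<forall>j. \<forall>t\<in>{0<..T}. \<forall>x\<in>{0..1}. (w j t has_real_derivative wx j t x) (at x within {0..1})"
    and W4: "\<forall>j. \<forall>t\<in>{0<..T}. \<forall>x\<in>{0<..<1}. (wx j t has_real_derivative wxx j t x) (at x)"
    and W5: "\<forall>j. \<forall>t\<in>{0<..T}. \<forall>x\<in>{0<..<1}. wt j t x \<ge> d * wxx j t x"
    and W6: "\<forall>j. \<forall>t\<in>{0<..T}. -d * wx j t 0 + \<alpha> * w j t 0 \<ge> \<beta> * sg j t"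
    and W7: "\<forall>j. \<forall>t\<in>{0<..T}. d * wx j t 1 + \<alpha> * w j t 1 \<ge> \<beta> * sg (j + 1) t"
    and R1: "\<forall>j. \<forall>t\<in>{0..T}. (sg j has_real_derivative dsg j t) (at t within {0..})"
    and R2: "\<forall>j. \<forall>t\<in>{0<..T}. dsg j t \<ge> Fr j t + \<alpha> * (w j t 0 + w (j - 1) t 1) - 2 * \<beta> * sg j t"
    and Lip: "\<forall>j. \<forall>t\<in>{0..T}. Fr j t \<ge> - L * \<bar>sg j t\<bar>"
    and Bd: "\<forall>j. \<forall>t\<in>{0..T}. \<forall>x\<in>{0..1}. \<bar>w j t x\<bar> \<le> M \<and> \<bar>sg j t\<bar> \<le> M"
    and I1: "\<forall>j. \<forall>x\<in>{0..1}. w j 0 x \<ge> 0" and I2: "\<forall>j. sg j 0 \<ge> 0"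
  defines "bb \<equiv> (\<lambda>j::int. 1 + (real_of_int j)^2)"
  defines "aa \<equiv> (\<lambda>j::int. \<beta> / \<alpha> * (bb j + bb (j + 1)))"
  defines "K \<equiv> L + 8 * \<beta> + 1"
  shows "\<forall>j. \<forall>t\<in>{0..T}. (\<forall>x\<in>{0..1}. w j t x + \<epsilon> * exp (K * t) * aa j > 0) \<and> sg j t + \<epsilon> * exp (K * t) * bb j > 0"
proof (rule ccontr)
  assume neg: "\<not> ?thesis"
  define z where "z = (\<lambda>j t x. w j t x + \<epsilon> * exp (K * t) * aa j)"
  define s where "s = (\<lambda>j t (x::real). sg j t + \<epsilon> * exp (K * t) * bb j)"
  define c where "c = min 1 (\<beta> / \<alpha>)"
  have c0: "c > 0" using a b by (simp add: c_def)
  have bb1: "bb j \<ge> 1" for j by (simp add: bb_def)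
  have bbs: "bb (j + 1) + bb (j - 1) = 2 * bb j + 2" for j by (simp add: bb_def power2_eq_square algebra_simps)
  have aab1: "\<alpha> * aa j - \<beta> * bb j = \<beta> * bb (j + 1)" for j using a by (simp add: aa_def field_simps)
  have aab2: "\<alpha> * aa j - \<beta> * bb (j + 1) = \<beta> * bb j" for j using a by (simp add: aa_def field_simps)
  have aa_ge: "aa j \<ge> c * bb j" for j
  proof -
    have "c * bb j \<le> \<beta> / \<alpha> * bb j" using bb1[of j] by (intro mult_right_mono) (auto simp: c_def)
    also have "\<dots> \<le> \<beta> / \<alpha> * (bb j + bb (j + 1))" using a b bb1[of "j+1"] by (intro mult_left_mono) auto
    finally show ?thesis by (simp add: aa_def)
  qed
  have aapos: "aa j > 0" for j
  proof -
    have "c * bb j > 0" using c0 bb1[of j] by simp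
    thus ?thesis using aa_ge[of j] by linarith
  qed
  have K0: "K > 0" using L b by (simp add: K_def)
  have E1: "exp (K * t) \<ge> 1" if "t \<ge> 0" for t using K0 that by simp
  define J where "J = {j. \<epsilon> * c * bb j \<le> M}"
  have finJ: "finite J"
  proof -
    have "J \<subseteq> {-\<lceil>M / (\<epsilon> * c)\<rceil> .. \<lceil>M / (\<epsilon> * c)\<rceil>}"
    proof
      fix j assume "j \<in> J"
      hence "\<epsilon> * c * bb j \<le> M" by (simp add: J_def)
      hence "bb j \<le> M / (\<epsilon> * c)" using ep c0 by (simp add: field_simps)
      moreover have "\<bar>real_of_int j\<bar> \<le> bb j"
      proof -
        have "\<bar>real_of_int j\<bar> \<le> 1 + (real_of_int j)^2"
        proof (cases "\<bar>real_of_int j\<bar> \<le> 1")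
          case True thus ?thesis by (simp add: add_increasing2)
        next
          case False
          hence "\<bar>real_of_int j\<bar> * 1 \<le> \<bar>real_of_int j\<bar> * \<bar>real_of_int j\<bar>"
            by (intro mult_left_mono) auto
          also have "\<dots> = (real_of_int j)^2" by (simp add: power2_eq_square abs_mult_self_eq)
          finally show ?thesis by simp
        qed
        thus ?thesis by (simp add: bb_def)
      qed
      ultimately have "\<bar>real_of_int j\<bar> \<le> M / (\<epsilon> * c)" by linarith
      hence "\<bar>j\<bar> \<le> \<lceil>M / (\<epsilon> * c)\<rceil>" by (simp add: le_ceiling_iff)
      thus "j \<in> {-\<lceil>M / (\<epsilon> * c)\<rceil> .. \<lceil>M / (\<epsilon> * c)\<rceil>}" by auto
    qed
    thus ?thesis by (rule finite_subset) simp
  qed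
  have outJ: "z j t x > 0 \<and> s j t x > 0" if "j \<notin> J" "t \<in> {0..T}" "x \<in> {0..1}" for j t x
  proof -
    have big: "\<epsilon> * c * bb j > M" using that by (simp add: J_def)
    have Et: "exp (K * t) \<ge> 1" using E1 that by auto
    have "\<epsilon> * exp (K * t) * aa j \<ge> \<epsilon> * 1 * (c * bb j)"
      using ep Et aa_ge[of j] c0 bb1[of j] by (intro mult_mono) auto
    moreover have "\<epsilon> * exp (K * t) * bb j \<ge> \<epsilon> * 1 * (c * bb j)"
    proof -
      have "c * bb j \<le> bb j" using bb1[of j] c0 by (intro mult_left_le_one_le) (auto simp: c_def)
      thus ?thesis using ep Et bb1[of j] c0 by (intro mult_mono) auto
    qed
    moreover have "\<bar>w j t x\<bar> \<le> M" "\<bar>sg j t\<bar> \<le> M" using Bd that by auto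
    ultimately have f1: "\<epsilon> * exp (K * t) * aa j \<ge> \<epsilon> * c * bb j"
      and f2: "\<epsilon> * exp (K * t) * bb j \<ge> \<epsilon> * c * bb j"
      and f3: "\<bar>w j t x\<bar> \<le> M" and f4: "\<bar>sg j t\<bar> \<le> M" by (simp_all add: mult.assoc)
    show ?thesis unfolding z_def s_def using f1 f2 f3 f4 big by (auto simp: abs_le_iff)
  qed
  define FF where "FF = (\<lambda>j. z j) ` J \<union> (\<lambda>j. s j) ` J"
  have finF: "finite FF" using finJ by (simp add: FF_def)
  have contsg: "continuous_on {0..T} (sg j)" for j
  proof (rule DERIV_continuous_on[of _ _ "dsg j"])
    fix t assume t: "t \<in> {0..T}"
    hence "(sg j has_real_derivative dsg j t) (at t within {0..})" using R1 by auto
    thus "(sg j has_real_derivative dsg j t) (at t within {0..T})" by (rule DERIV_subset) auto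
  qed
  have contF: "\<forall>Z\<in>FF. continuous_on ({0..T} \<times> {0..1}) (\<lambda>(t,x). Z t x)"
  proof
    fix Z assume "Z \<in> FF"
    then obtain j where "Z = z j \<or> Z = s j" by (auto simp: FF_def)
    thus "continuous_on ({0..T} \<times> {0..1}) (\<lambda>(t,x). Z t x)"
    proof
      assume Zj: "Z = z j"
      have cw: "continuous_on ({0..T} \<times> {0..1}) (\<lambda>p. w j (fst p) (snd p))"
        using W1 by (simp add: case_prod_beta')
      have "continuous_on ({0..T} \<times> {0..1}) (\<lambda>p. w j (fst p) (snd p) + \<epsilon> * exp (K * fst p) * aa j)"
        by (intro continuous_intros cw)
      thus ?thesis by (simp add: Zj z_def case_prod_beta')
    next
      assume Zj: "Z = s j"
      have cs: "continuous_on ({0..T} \<times> {0..1}) (\<lambda>p. sg j (fst p))"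
        by (rule continuous_on_compose2[OF contsg]) (auto intro: continuous_intros)
      have "continuous_on ({0..T} \<times> {0..1}) (\<lambda>p. sg j (fst p) + \<epsilon> * exp (K * fst p) * bb j)"
        by (intro continuous_intros cs)
      thus ?thesis by (simp add: Zj s_def case_prod_beta')
    qed
  qed
  have initF: "\<forall>Z\<in>FF. \<forall>x\<in>{0..1}. Z 0 x > 0"
  proof (intro ballI)
    fix Z x assume "Z \<in> FF" "x \<in> {(0::real)..1}"
    then obtain j where "Z = z j \<or> Z = s j" by (auto simp: FF_def)
    thus "Z 0 x > 0"
      using I1 I2 \<open>x \<in> _\<close> ep aapos[of j] bb1[of j] unfolding z_def s_def
      by (auto intro: add_nonneg_pos)
  qed
  have badF: "\<exists>Z\<in>FF. \<exists>t\<in>{0..T}. \<exists>x\<in>{0..1}. Z t x \<le> 0"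
  proof -
    from neg obtain j t where jt: "t \<in> {0..T}"
      and nn: "\<not> ((\<forall>x\<in>{0..1}. w j t x + \<epsilon> * exp (K * t) * aa j > 0) \<and> sg j t + \<epsilon> * exp (K * t) * bb j > 0)"
      by blast
    from nn have "\<not> ((\<forall>x\<in>{0..1}. z j t x > 0) \<and> s j t 0 > 0)"
      unfolding z_def s_def by simp
    then consider x where "x \<in> {0..1}" "z j t x \<le> 0" | "s j t 0 \<le> 0" by force
    thus ?thesis
    proof cases
      case (1 x)
      hence "j \<in> J" using outJ jt by force
      hence "z j \<in> FF" by (simp add: FF_def)
      thus ?thesis using 1 jt by blast
    next
      case 2
      hence "j \<in> J" using outJ[of j t 0] jt by force
      hence "s j \<in> FF" by (simp add: FF_def)
      moreover have "(0::real) \<in> {0..1}" by simp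
      ultimately show ?thesis using 2 jt by blast
    qed
  qed
  obtain ts Z x0 where ts: "ts \<in> {0<..T}" and ZF: "Z \<in> FF" and x0: "x0 \<in> {0..1}" "Z ts x0 = 0"
    and geF: "\<forall>Z\<in>FF. \<forall>x\<in>{0..1}. Z ts x \<ge> 0"
    and befF: "\<forall>Z\<in>FF. \<forall>s\<in>{0..<ts}. \<forall>x\<in>{0..1}. Z s x > 0"
    using first_touch[OF finF _ contF initF badF] T by auto
  have tsT: "ts \<in> {0..T}" using ts by auto
  have ge_all: "z j ts y \<ge> 0 \<and> s j ts y \<ge> 0" if "y \<in> {0..1}" for j y
  proof (cases "j \<in> J")
    case True thus ?thesis using geF that by (auto simp: FF_def)
  next
    case False thus ?thesis using outJ[OF False tsT that] by auto
  qed
  have bef_all: "z j s' y > 0 \<and> s j s' y > 0" if "s' \<in> {0..<ts}" "y \<in> {0..1}" for j s' y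
  proof (cases "j \<in> J")
    case True thus ?thesis using befF that by (auto simp: FF_def)
  next
    case False
    have "s' \<in> {0..T}" using that ts by auto
    thus ?thesis using outJ[OF False _ that(2)] by auto
  qed
  define Ets where "Ets = exp (K * ts)"
  have Ets0: "Ets > 0" by (simp add: Ets_def)
  have dexp: "((\<lambda>t. \<epsilon> * exp (K * t) * q) has_real_derivative \<epsilon> * (Ets * K) * q) (at ts within S)" for q S
    unfolding Ets_def by (auto intro!: derivative_eq_intros)
  obtain j where "Z = z j \<or> Z = s j" using ZF by (auto simp: FF_def)
  thus False
  proof
    assume Zj: "Z = z j"
    have zx: "(z j ts has_real_derivative wx j ts y) (at y within {0..1})" if "y \<in> {0..1}" for y
    proof -
      have "((\<lambda>x. w j ts x + \<epsilon> * exp (K * ts) * aa j) has_real_derivative wx j ts y + 0) (at y within {0..1})"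
        using W3 ts that by (intro DERIV_add DERIV_const) auto
      thus ?thesis by (simp add: z_def)
    qed
    have zmin: "\<forall>y\<in>{0..1}. z j ts y \<ge> z j ts x0" using ge_all x0 Zj by auto
    have zval: "w j ts x0 = - (\<epsilon> * Ets * aa j)" using x0 Zj by (simp add: z_def Ets_def)
    show False
    proof (cases "x0 \<in> {0<..<1}")
      case True
      have dt: "((\<lambda>t. z j t x0) has_real_derivative wt j ts x0 + \<epsilon> * (Ets * K) * aa j) (at ts)"
        unfolding z_def using W2 ts True by (intro DERIV_add dexp) auto
      have "wt j ts x0 + \<epsilon> * (Ets * K) * aa j \<le> 0"
      proof (rule deriv_left_min[OF dt, of 0])
        show "0 < ts" using ts by simp
        show "\<forall>s\<in>{0..<ts}. z j ts x0 \<le> z j s x0" using bef_all x0 Zj by (auto intro: less_imp_le)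
      qed simp
      moreover have "wxx j ts x0 \<ge> 0"
        by (rule interior_min_second[OF True zmin, of "wx j ts"]) (use zx W4 ts True in auto)
      moreover have "wt j ts x0 \<ge> d * wxx j ts x0" using W5 ts True by auto
      moreover have "\<epsilon> * (Ets * K) * aa j > 0" using ep Ets0 K0 aapos[of j] by simp
      moreover have "d * wxx j ts x0 \<ge> 0" using d \<open>wxx j ts x0 \<ge> 0\<close> by simp
      ultimately show False by linarith
    next
      case False
      hence "x0 = 0 \<or> x0 = 1" using x0 by auto
      thus False
      proof
        assume x00: "x0 = 0"
        have "wx j ts 0 \<ge> 0"
          by (rule deriv_endpoint_left[OF zx]) (use zmin x00 in auto)
        moreover have "-d * wx j ts 0 + \<alpha> * w j ts 0 \<ge> \<beta> * sg j ts" using W6 ts by auto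
        moreover have "\<beta> * sg j ts \<ge> \<beta> * (- (\<epsilon> * Ets * bb j))"
          using ge_all[of 0 j] b by (intro mult_left_mono) (auto simp: s_def Ets_def)
        moreover have "\<alpha> * w j ts 0 = \<alpha> * (- (\<epsilon> * Ets * aa j))" using zval x00 by simp
        moreover have "\<epsilon> * Ets * (\<alpha> * aa j - \<beta> * bb j) > 0"
          using aab1[of j] ep Ets0 b bb1[of "j+1"] by simp
        ultimately have "d * wx j ts 0 < 0" by (simp add: algebra_simps)
        moreover have "d * wx j ts 0 \<ge> 0" using d \<open>wx j ts 0 \<ge> 0\<close> by simp
        ultimately show False by linarith
      next
        assume x01: "x0 = 1"
        have "wx j ts 1 \<le> 0"
          by (rule deriv_endpoint_right[OF zx]) (use zmin x01 in auto)
        moreover have "d * wx j ts 1 + \<alpha> * w j ts 1 \<ge> \<beta> * sg (j + 1) ts" using W7 ts by auto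
        moreover have "\<beta> * sg (j + 1) ts \<ge> \<beta> * (- (\<epsilon> * Ets * bb (j + 1)))"
          using ge_all[of 0 "j+1"] b by (intro mult_left_mono) (auto simp: s_def Ets_def)
        moreover have "\<alpha> * w j ts 1 = \<alpha> * (- (\<epsilon> * Ets * aa j))" using zval x01 by simp
        moreover have "\<epsilon> * Ets * (\<alpha> * aa j - \<beta> * bb (j + 1)) > 0"
          using aab2[of j] ep Ets0 b bb1[of "j"] by simp
        ultimately have "d * wx j ts 1 > 0" by (simp add: algebra_simps)
        moreover have "d * wx j ts 1 \<le> 0" using d \<open>wx j ts 1 \<le> 0\<close> by (simp add: mult_nonneg_nonpos)
        ultimately show False by linarith
      qed
    qed
  next
    assume Zj: "Z = s j"
    have sval: "sg j ts = - (\<epsilon> * Ets * bb j)" using x0 Zj by (simp add: s_def Ets_def)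
    have dt: "((\<lambda>t. s j t 0) has_real_derivative dsg j ts + \<epsilon> * (Ets * K) * bb j) (at ts within {0..})"
      unfolding s_def using R1 tsT by (intro DERIV_add dexp) auto
    have "dsg j ts + \<epsilon> * (Ets * K) * bb j \<le> 0"
    proof (rule deriv_left_min[OF dt, of 0])
      show "0 < ts" using ts by simp
      show "\<forall>s'\<in>{0..<ts}. s j ts 0 \<le> s j s' 0"
        using bef_all[of _ 0 j] x0 Zj by (auto simp: s_def intro: less_imp_le)
    qed auto
    moreover have "dsg j ts \<ge> Fr j ts + \<alpha> * w j ts 0 + \<alpha> * w (j - 1) ts 1 - 2 * \<beta> * sg j ts"
      using R2 ts by (auto simp: algebra_simps)
    moreover have "Fr j ts \<ge> - (L * (\<epsilon> * Ets * bb j))"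
    proof -
      have "\<epsilon> * Ets * bb j > 0" using ep Ets0 bb1[of j] by simp
      hence "\<bar>sg j ts\<bar> = \<epsilon> * Ets * bb j" using sval by simp
      thus ?thesis using Lip tsT by (metis mult_minus_left)
    qed
    moreover have "\<alpha> * w j ts 0 \<ge> - (\<alpha> * (\<epsilon> * Ets * aa j))"
    proof -
      have "w j ts 0 \<ge> - (\<epsilon> * Ets * aa j)" using ge_all[of 0 j] by (simp add: z_def Ets_def)
      hence "\<alpha> * w j ts 0 \<ge> \<alpha> * (- (\<epsilon> * Ets * aa j))" using a by (intro mult_left_mono) auto
      thus ?thesis by simp
    qed
    moreover have "\<alpha> * w (j - 1) ts 1 \<ge> - (\<alpha> * (\<epsilon> * Ets * aa (j - 1)))"
    proof -
      have "w (j - 1) ts 1 \<ge> - (\<epsilon> * Ets * aa (j - 1))" using ge_all[of 1 "j - 1"] by (simp add: z_def Ets_def)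
      hence "\<alpha> * w (j - 1) ts 1 \<ge> \<alpha> * (- (\<epsilon> * Ets * aa (j - 1)))" using a by (intro mult_left_mono) auto
      thus ?thesis by simp
    qed
    moreover have "2 * \<beta> * sg j ts = - (2 * \<beta> * (\<epsilon> * Ets * bb j))" using sval by simp
    moreover have "\<epsilon> * (Ets * K) * bb j = K * (\<epsilon> * Ets * bb j)" by simp
    moreover have "- (L * (\<epsilon> * Ets * bb j)) - \<alpha> * (\<epsilon> * Ets * aa j) - \<alpha> * (\<epsilon> * Ets * aa (j - 1)) + 2 * \<beta> * (\<epsilon> * Ets * bb j) + K * (\<epsilon> * Ets * bb j) > 0"
    proof -
      have "\<alpha> * aa j + \<alpha> * aa (j - 1) = \<beta> * (2 * bb j + bb (j + 1) + bb (j - 1))"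
        using a by (simp add: aa_def field_simps)
      also have "\<dots> = \<beta> * (4 * bb j + 2)" using bbs[of j] by simp
      finally have e: "\<alpha> * aa j + \<alpha> * aa (j - 1) = \<beta> * (4 * bb j + 2)" .
      have "- L * bb j - \<alpha> * aa j - \<alpha> * aa (j - 1) + 2 * \<beta> * bb j + K * bb j
          = (6 * \<beta> + 1) * bb j - 2 * \<beta>" using e by (simp add: K_def algebra_simps)
      moreover have "(6 * \<beta> + 1) * bb j - 2 * \<beta> > 0"
      proof -
        have "(6 * \<beta> + 1) * bb j \<ge> (6 * \<beta> + 1) * 1" using bb1[of j] b by (intro mult_left_mono) auto
        hence "(6 * \<beta> + 1) * bb j \<ge> 6 * \<beta> + 1" by simp
        thus ?thesis using b by linarith
      qed
      ultimately have "- L * bb j - \<alpha> * aa j - \<alpha> * aa (j - 1) + 2 * \<beta> * bb j + K * bb j > 0" by simp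
      hence "\<epsilon> * Ets * (- L * bb j - \<alpha> * aa j - \<alpha> * aa (j - 1) + 2 * \<beta> * bb j + K * bb j) > 0"
        using ep Ets0 by simp
      thus ?thesis by (simp add: algebra_simps)
    qed
    ultimately show False by linarith
  qed
qed

lemma part1:
  fixes w wt wx wxx :: "int \<Rightarrow> real \<Rightarrow> real \<Rightarrow> real" and sg dsg Fr :: "int \<Rightarrow> real \<Rightarrow> real"
  assumes a: "\<alpha> > 0" and b: "\<beta> > 0" and d: "d > 0" and T: "T > 0" and L: "L \<ge> 0"
    and W1: "\<forall>j. continuous_on ({0..T} \<times> {0..1}) (\<lambda>(t,x). w j t x)"
    and W2: "\<forall>j. \<forall>t\<in>{0<..T}. \<forall>x\<in>{0<..<1}. ((\<lambda>s. w j s x) has_real_derivative wt j t x) (at t)"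
    and W3: "\<forall>j. \<forall>t\<in>{0<..T}. \<forall>x\<in>{0..1}. (w j t has_real_derivative wx j t x) (at x within {0..1})"
    and W4: "\<forall>j. \<forall>t\<in>{0<..T}. \<forall>x\<in>{0<..<1}. (wx j t has_real_derivative wxx j t x) (at x)"
    and W5: "\<forall>j. \<forall>t\<in>{0<..T}. \<forall>x\<in>{0<..<1}. wt j t x \<ge> d * wxx j t x"
    and W6: "\<forall>j. \<forall>t\<in>{0<..T}. -d * wx j t 0 + \<alpha> * w j t 0 \<ge> \<beta> * sg j t"
    and W7: "\<forall>j. \<forall>t\<in>{0<..T}. d * wx j t 1 + \<alpha> * w j t 1 \<ge> \<beta> * sg (j + 1) t"
    and R1: "\<forall>j. \<forall>t\<in>{0..T}. (sg j has_real_derivative dsg j t) (at t within {0..})"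
    and R2: "\<forall>j. \<forall>t\<in>{0<..T}. dsg j t \<ge> Fr j t + \<alpha> * (w j t 0 + w (j - 1) t 1) - 2 * \<beta> * sg j t"
    and Lip: "\<forall>j. \<forall>t\<in>{0..T}. Fr j t \<ge> - L * \<bar>sg j t\<bar>"
    and Bd: "\<forall>j. \<forall>t\<in>{0..T}. \<forall>x\<in>{0..1}. \<bar>w j t x\<bar> \<le> M \<and> \<bar>sg j t\<bar> \<le> M"
    and I1: "\<forall>j. \<forall>x\<in>{0..1}. w j 0 x \<ge> 0" and I2: "\<forall>j. sg j 0 \<ge> 0"
  shows "\<forall>j. \<forall>t\<in>{0..T}. (\<forall>x\<in>{0..1}. w j t x \<ge> 0) \<and> sg j t \<ge> 0"
proof -
  define bb where "bb = (\<lambda>j::int. 1 + (real_of_int j)^2)"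
  define aa where "aa = (\<lambda>j::int. \<beta> / \<alpha> * (bb j + bb (j + 1)))"
  define K where "K = L + 8 * \<beta> + 1"
  have bbp: "bb j > 0" for j by (simp add: bb_def add_pos_nonneg)
  have aap: "aa j > 0" for j using a b bbp[of j] bbp[of "j+1"] by (simp add: aa_def)
  have E: "\<forall>j. \<forall>t\<in>{0..T}. (\<forall>x\<in>{0..1}. w j t x + \<epsilon> * exp (K * t) * aa j > 0) \<and> sg j t + \<epsilon> * exp (K * t) * bb j > 0"
    if "\<epsilon> > 0" for \<epsilon>
    unfolding aa_def bb_def K_def by (rule part1_eps[OF a b d T L that W1 W2 W3 W4 W5 W6 W7 R1 R2 Lip Bd I1 I2])
  have lim: "y \<ge> 0" if "\<forall>\<epsilon>>0. y + \<epsilon> * C > 0" "C > 0" for y C :: real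
  proof (rule ccontr)
    assume "\<not> y \<ge> 0"
    define \<epsilon> where "\<epsilon> = - y / (2 * C)"
    have "\<epsilon> > 0" unfolding \<epsilon>_def using \<open>\<not> y \<ge> 0\<close> that(2) by (intro divide_pos_pos) auto
    hence "y + \<epsilon> * C > 0" using that(1) by blast
    moreover have "\<epsilon> * C = - y / 2" using that(2) by (simp add: \<epsilon>_def)
    ultimately show False using \<open>\<not> y \<ge> 0\<close> by argo
  qed
  show ?thesis
  proof (intro allI ballI conjI)
    fix j t x assume t: "t \<in> {0..T}" and x: "x \<in> {(0::real)..1}"
    show "w j t x \<ge> 0"
    proof (rule lim[of _ "exp (K * t) * aa j"])
      show "\<forall>\<epsilon>>0. w j t x + \<epsilon> * (exp (K * t) * aa j) > 0"
      proof (intro allI impI)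
        fix \<epsilon> :: real assume "\<epsilon> > 0"
        from E[OF this] t x have "w j t x + \<epsilon> * exp (K * t) * aa j > 0" by blast
        thus "w j t x + \<epsilon> * (exp (K * t) * aa j) > 0" by (simp add: mult.assoc)
      qed
      show "exp (K * t) * aa j > 0" using aap[of j] by simp
    qed
  next
    fix j t assume t: "t \<in> {0..T}"
    show "sg j t \<ge> 0"
    proof (rule lim[of _ "exp (K * t) * bb j"])
      show "\<forall>\<epsilon>>0. sg j t + \<epsilon> * (exp (K * t) * bb j) > 0"
      proof (intro allI impI)
        fix \<epsilon> :: real assume "\<epsilon> > 0"
        from E[OF this] t have "sg j t + \<epsilon> * exp (K * t) * bb j > 0" by blast
        thus "sg j t + \<epsilon> * (exp (K * t) * bb j) > 0" by (simp add: mult.assoc)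
      qed
      show "exp (K * t) * bb j > 0" using bbp[of j] by simp
    qed
  qed
qed

lemma rho_pos:
  fixes s ds q :: "real \<Rightarrow> real"
  assumes T: "T > 0"
    and R1: "\<forall>t\<in>{0..T}. (s has_real_derivative ds t) (at t within {0..})"
    and R2: "\<forall>t\<in>{0<..T}. ds t \<ge> - K * s t + q t"
    and q0: "\<forall>t\<in>{0<..T}. q t \<ge> 0" and s0: "s 0 \<ge> 0"
    and pos: "s 0 > 0 \<or> (\<forall>t\<in>{0<..T}. q t > 0)"
  shows "s T > 0"
proof -
  define g where "g = (\<lambda>t. exp (K * t) * s t)"
  have dg: "(g has_real_derivative exp (K * t) * (K * s t + ds t)) (at t)" if "t \<in> {0<..T}" for t
  proof -
    have "(s has_real_derivative ds t) (at t within {0..})" using R1 that by auto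
    hence "(s has_real_derivative ds t) (at t within {0<..})" by (rule DERIV_subset) auto
    hence ds: "(s has_real_derivative ds t) (at t)"
      using that by (simp add: at_within_open[of t "{0<..}"])
    show ?thesis unfolding g_def
      by (auto intro!: derivative_eq_intros ds simp: algebra_simps)
  qed
  have dgp: "exp (K * t) * (K * s t + ds t) \<ge> exp (K * t) * q t" if "t \<in> {0<..T}" for t
  proof -
    have "q t \<le> K * s t + ds t" using R2 that by force
    thus ?thesis by (intro mult_left_mono) auto
  qed
  have dgnn: "exp (K * t) * (K * s t + ds t) \<ge> 0" if "t \<in> {0<..T}" for t
  proof -
    have "exp (K * t) * q t \<ge> 0" using q0 that by simp
    thus ?thesis using dgp[OF that] by linarith
  qed
  have cg: "continuous_on {0..T} g"
  proof -
    have "continuous_on {0..T} s"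
    proof (rule DERIV_continuous_on[of _ _ ds])
      fix t assume "t \<in> {0..T}"
      hence "(s has_real_derivative ds t) (at t within {0..})" using R1 by auto
      thus "(s has_real_derivative ds t) (at t within {0..T})" by (rule DERIV_subset) auto
    qed
    thus ?thesis unfolding g_def by (intro continuous_intros)
  qed
  have mono: "g a \<le> g b" if "0 \<le> a" "a \<le> b" "b \<le> T" for a b
  proof (rule DERIV_nonneg_imp_increasing_open[OF that(2)])
    fix x assume "a < x" "x < b"
    hence "x \<in> {0<..T}" using that by auto
    thus "\<exists>y. (g has_real_derivative y) (at x) \<and> y \<ge> 0" using dg dgnn by blast
  next
    show "continuous_on {a..b} g" using cg by (rule continuous_on_subset) (use that in auto)
  qed
  have g0: "g 0 = s 0" by (simp add: g_def)
  have "g T > 0"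
    using pos
  proof
    assume "s 0 > 0"
    thus "g T > 0" using mono[of 0 T] T g0 by simp
  next
    assume qp: "\<forall>t\<in>{0<..T}. q t > 0"
    have dd: "\<And>x. T/2 \<le> x \<Longrightarrow> x \<le> T \<Longrightarrow> (g has_real_derivative exp (K * x) * (K * s x + ds x)) (at x)"
    proof -
      fix x assume "T/2 \<le> x" "x \<le> T"
      hence "x \<in> {0<..T}" using T by auto
      thus "(g has_real_derivative exp (K * x) * (K * s x + ds x)) (at x)" by (rule dg)
    qed
    have TT: "T/2 < T" using T by simp
    obtain z where z: "T/2 < z" "z < T" "g T - g (T/2) = (T - T/2) * (exp (K * z) * (K * s z + ds z))"
      using MVT2[OF TT dd] by blast
    have "z \<in> {0<..T}" using z T by auto
    hence "exp (K * z) * (K * s z + ds z) > 0"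
    proof -
      assume zz: "z \<in> {0<..T}"
      have "exp (K * z) * q z > 0" using qp zz by simp
      thus ?thesis using dgp[OF zz] by linarith
    qed
    hence "(T - T/2) * (exp (K * z) * (K * s z + ds z)) > 0" using T by simp
    hence "g T - g (T/2) > 0" using z(3) by linarith
    moreover have "g (T/2) \<ge> g 0" using mono[of 0 "T/2"] T by simp
    ultimately show "g T > 0" using g0 s0 by linarith
  qed
  thus ?thesis by (simp add: g_def zero_less_mult_iff)
qed

theorem proposition2p2:
  fixes \<alpha> \<beta> d :: real and f f' :: "real \<Rightarrow> real"
    and vl vu :: "int \<Rightarrow> real \<Rightarrow> real \<Rightarrow> real" and rl ru :: "int \<Rightarrow> real \<Rightarrow> real"
  assumes "\<alpha> > 0" "\<beta> > 0" "d > 0"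
    and f_C1: "\<forall>u\<in>{0..1}. (f has_real_derivative f' u) (at u within {0..1})"
    and f'_cont: "continuous_on {0..1} f'"
    and "f 0 = 0" "f 1 = 0"
    and "\<forall>u\<in>{0<..<1}. 0 < f u \<and> f u \<le> f' 0 * u"
    and f_loc_lip: "\<forall>a b. \<exists>L. L-lipschitz_on {a..b} f"
    and "\<forall>u. u \<notin> {0..1} \<longrightarrow> f u < 0"
    and sub: "subsolution \<alpha> \<beta> d f vl rl"
    and sup: "supersolution \<alpha> \<beta> d f vu ru"
    and "locally_bounded_in_time vl rl" "locally_bounded_in_time vu ru"
    and init_v: "\<forall>j. \<forall>x\<in>{0..1}. vl j 0 x \<le> vu j 0 x"
    and init_rho: "\<forall>j. rl j 0 \<le> ru j 0"
  shows "(\<forall>t>0. \<forall>j. \<forall>x\<in>{0..1}. vl j t x \<le> vu j t x \<and> rl j t \<le> ru j t) \<and>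
         ((\<exists>j. \<exists>x\<in>{0..1}. vl j 0 x \<noteq> vu j 0 x) \<or> (\<exists>j. rl j 0 \<noteq> ru j 0) \<longrightarrow>
           (\<forall>t>0. \<forall>j. \<forall>x\<in>{0..1}. vl j t x < vu j t x \<and> rl j t < ru j t))"
proof -
  have a: "\<alpha> > 0" and b: "\<beta> > 0" and d: "d > 0" using assms(1-3) .
  from sub obtain vtl vxl vxxl drl where regl: "reg_derivs vl rl vtl vxl vxxl drl"
    and subI: "\<forall>t>0. \<forall>j.
         (\<forall>x\<in>{0<..<1}. vtl j t x \<le> d * vxxl j t x) \<and>
         drl j t \<le> f (rl j t) + \<alpha> * (vl j t 0 + vl (j - 1) t 1) - 2 * \<beta> * rl j t \<and>
         - d * vxl j t 0 + \<alpha> * vl j t 0 \<le> \<beta> * rl j t \<and>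
         d * vxl j t 1 + \<alpha> * vl j t 1 \<le> \<beta> * rl (j + 1) t"
    unfolding subsolution_def by blast
  from sup obtain vtu vxu vxxu dru where regu: "reg_derivs vu ru vtu vxu vxxu dru"
    and supI: "\<forall>t>0. \<forall>j.
         (\<forall>x\<in>{0<..<1}. vtu j t x \<ge> d * vxxu j t x) \<and>
         dru j t \<ge> f (ru j t) + \<alpha> * (vu j t 0 + vu (j - 1) t 1) - 2 * \<beta> * ru j t \<and>
         - d * vxu j t 0 + \<alpha> * vu j t 0 \<ge> \<beta> * ru j t \<and>
         d * vxu j t 1 + \<alpha> * vu j t 1 \<ge> \<beta> * ru (j + 1) t"
    unfolding supersolution_def by blast
  note RL = regl[unfolded reg_derivs_def] and RU = regu[unfolded reg_derivs_def]
  define w where "w = (\<lambda>j t x. vu j t x - vl j t x)"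
  define wt where "wt = (\<lambda>j t x. vtu j t x - vtl j t x)"
  define wx where "wx = (\<lambda>j t x. vxu j t x - vxl j t x)"
  define wxx where "wxx = (\<lambda>j t x. vxxu j t x - vxxl j t x)"
  define sg where "sg = (\<lambda>j t. ru j t - rl j t)"
  define dsg where "dsg = (\<lambda>j t. dru j t - drl j t)"
  define Fr where "Fr = (\<lambda>j t. f (ru j t) - f (rl j t))"
  have W1: "continuous_on ({0..} \<times> {0..1}) (\<lambda>(t,x). w j t x)" for j
  proof -
    have c1: "continuous_on ({0..} \<times> {0..1}) (\<lambda>p. vu j (fst p) (snd p))"
      using RU by (simp add: case_prod_beta')
    have c2: "continuous_on ({0..} \<times> {0..1}) (\<lambda>p. vl j (fst p) (snd p))"
      using RL by (simp add: case_prod_beta')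
    have "continuous_on ({0..} \<times> {0..1}) (\<lambda>p. vu j (fst p) (snd p) - vl j (fst p) (snd p))"
      by (intro continuous_intros c1 c2)
    thus ?thesis by (simp add: w_def case_prod_beta')
  qed
  have W2: "((\<lambda>s. w j s x) has_real_derivative wt j t x) (at t)" if "t > 0" "x \<in> {0<..<1}" for j t x
    unfolding w_def wt_def using RU RL that by (intro DERIV_diff) auto
  have W3: "(w j t has_real_derivative wx j t x) (at x within {0..1})" if "t > 0" "x \<in> {0..1}" for j t x
  proof -
    have "((\<lambda>y. vu j t y - vl j t y) has_real_derivative wx j t x) (at x within {0..1})"
      unfolding wx_def using RU RL that by (intro DERIV_diff) auto
    thus ?thesis by (simp add: w_def)
  qed
  have W4: "(wx j t has_real_derivative wxx j t x) (at x)" if "t > 0" "x \<in> {0<..<1}" for j t x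
  proof -
    have "((\<lambda>y. vxu j t y - vxl j t y) has_real_derivative wxx j t x) (at x)"
      unfolding wxx_def using RU RL that by (intro DERIV_diff) auto
    thus ?thesis by (simp add: wx_def)
  qed
  have W5: "wt j t x \<ge> d * wxx j t x" if "t > 0" "x \<in> {0<..<1}" for j t x
  proof -
    have "vtu j t x \<ge> d * vxxu j t x" "vtl j t x \<le> d * vxxl j t x" using subI supI that by auto
    thus ?thesis by (simp add: wt_def wxx_def algebra_simps)
  qed
  have W6: "-d * wx j t 0 + \<alpha> * w j t 0 \<ge> \<beta> * sg j t" if "t > 0" for j t
  proof -
    have "- d * vxu j t 0 + \<alpha> * vu j t 0 \<ge> \<beta> * ru j t" "- d * vxl j t 0 + \<alpha> * vl j t 0 \<le> \<beta> * rl j t"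
      using subI supI that by auto
    thus ?thesis by (simp add: wx_def w_def sg_def algebra_simps)
  qed
  have W7: "d * wx j t 1 + \<alpha> * w j t 1 \<ge> \<beta> * sg (j + 1) t" if "t > 0" for j t
  proof -
    have "d * vxu j t 1 + \<alpha> * vu j t 1 \<ge> \<beta> * ru (j + 1) t" "d * vxl j t 1 + \<alpha> * vl j t 1 \<le> \<beta> * rl (j + 1) t"
      using subI supI that by auto
    thus ?thesis by (simp add: wx_def w_def sg_def algebra_simps)
  qed
  have R1: "(sg j has_real_derivative dsg j t) (at t within {0..})" if "t \<ge> 0" for j t
  proof -
    have "((\<lambda>s. ru j s - rl j s) has_real_derivative dsg j t) (at t within {0..})"
      unfolding dsg_def using RU RL that by (intro DERIV_diff) auto
    thus ?thesis by (simp add: sg_def)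
  qed
  have R2: "dsg j t \<ge> Fr j t + \<alpha> * (w j t 0 + w (j - 1) t 1) - 2 * \<beta> * sg j t" if "t > 0" for j t
  proof -
    have "dru j t \<ge> f (ru j t) + \<alpha> * (vu j t 0 + vu (j - 1) t 1) - 2 * \<beta> * ru j t"
         "drl j t \<le> f (rl j t) + \<alpha> * (vl j t 0 + vl (j - 1) t 1) - 2 * \<beta> * rl j t"
      using subI supI that by auto
    thus ?thesis by (simp add: dsg_def Fr_def w_def sg_def algebra_simps)
  qed
  have bnd: "\<exists>M L. L \<ge> 0 \<and> (\<forall>j. \<forall>t\<in>{0..T}. \<forall>x\<in>{0..1}. \<bar>w j t x\<bar> \<le> M \<and> \<bar>sg j t\<bar> \<le> M)
      \<and> (\<forall>j. \<forall>t\<in>{0..T}. \<bar>Fr j t\<bar> \<le> L * \<bar>sg j t\<bar>)" if T: "T > 0" for T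
  proof -
    obtain Ml where Ml: "\<forall>t\<in>{0..T}. \<forall>j. \<forall>x\<in>{0..1}. \<bar>vl j t x\<bar> + \<bar>rl j t\<bar> \<le> Ml"
      using assms(13) T unfolding locally_bounded_in_time_def by blast
    obtain Mu where Mu: "\<forall>t\<in>{0..T}. \<forall>j. \<forall>x\<in>{0..1}. \<bar>vu j t x\<bar> + \<bar>ru j t\<bar> \<le> Mu"
      using assms(14) T unfolding locally_bounded_in_time_def by blast
    define M where "M = Ml + Mu"
    obtain L where L: "L-lipschitz_on {-M..M} f" using f_loc_lip by blast
    have L0: "L \<ge> 0" using L by (simp add: lipschitz_on_def)
    have B: "\<bar>vl j t x\<bar> + \<bar>rl j t\<bar> \<le> Ml" "\<bar>vu j t x\<bar> + \<bar>ru j t\<bar> \<le> Mu"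
      if "t \<in> {0..T}" "x \<in> {0..1}" for j t x using Ml Mu that by auto
    have "(0::real) \<in> {0..T}" "(0::real) \<in> {0..1}" using T by auto
    hence "\<bar>vl 0 0 0\<bar> + \<bar>rl 0 0\<bar> \<le> Ml" "\<bar>vu 0 0 0\<bar> + \<bar>ru 0 0\<bar> \<le> Mu" using B by blast+
    moreover have "\<bar>vl 0 0 0\<bar> \<ge> 0" "\<bar>rl 0 0\<bar> \<ge> 0" "\<bar>vu 0 0 0\<bar> \<ge> 0" "\<bar>ru 0 0\<bar> \<ge> 0" by simp_all
    ultimately have Bl0: "Ml \<ge> 0" "Mu \<ge> 0" by linarith+
    show ?thesis
    proof (intro exI conjI allI ballI)
      show "L \<ge> 0" by (rule L0)
    next
      fix j t x assume t: "t \<in> {0..T}" and x: "x \<in> {(0::real)..1}"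
      show "\<bar>w j t x\<bar> \<le> M" using B[OF t x, of j] by (simp add: w_def M_def)
      show "\<bar>sg j t\<bar> \<le> M" using B[OF t x, of j] by (simp add: sg_def M_def)
    next
      fix j t assume t: "t \<in> {0..T}"
      have "\<bar>ru j t\<bar> \<le> M" "\<bar>rl j t\<bar> \<le> M" using B[OF t, of 0 j] Bl0 by (auto simp: M_def)
      hence "ru j t \<in> {-M..M}" "rl j t \<in> {-M..M}" by auto
      hence "dist (f (ru j t)) (f (rl j t)) \<le> L * dist (ru j t) (rl j t)"
        using L by (simp add: lipschitz_on_def)
      thus "\<bar>Fr j t\<bar> \<le> L * \<bar>sg j t\<bar>" by (simp add: Fr_def sg_def dist_real_def)
    qed
  qed
  have nonneg: "(\<forall>x\<in>{0..1}. w j t x \<ge> 0) \<and> sg j t \<ge> 0" if t: "t \<ge> 0" for j t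
  proof -
    define T where "T = t + 1"
    have T: "T > 0" using t by (simp add: T_def)
    obtain M L where L0: "L \<ge> 0" and Bd: "\<forall>j. \<forall>t\<in>{0..T}. \<forall>x\<in>{0..1}. \<bar>w j t x\<bar> \<le> M \<and> \<bar>sg j t\<bar> \<le> M"
      and FL: "\<forall>j. \<forall>t\<in>{0..T}. \<bar>Fr j t\<bar> \<le> L * \<bar>sg j t\<bar>"
      using bnd[OF T] by blast
    have Lip: "\<forall>j. \<forall>t\<in>{0..T}. Fr j t \<ge> - L * \<bar>sg j t\<bar>"
    proof (intro allI ballI)
      fix j t assume "t \<in> {0..T}"
      hence "\<bar>Fr j t\<bar> \<le> L * \<bar>sg j t\<bar>" using FL by blast
      thus "Fr j t \<ge> - L * \<bar>sg j t\<bar>" by linarith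
    qed
    have "\<forall>j. \<forall>t\<in>{0..T}. (\<forall>x\<in>{0..1}. w j t x \<ge> 0) \<and> sg j t \<ge> 0"
    proof (rule part1[OF a b d T L0, of w wt wx wxx sg dsg Fr M])
      show "\<forall>j. continuous_on ({0..T} \<times> {0..1}) (\<lambda>(t,x). w j t x)"
      proof
        fix j show "continuous_on ({0..T} \<times> {0..1}) (\<lambda>(t,x). w j t x)"
          by (rule continuous_on_subset[OF W1]) auto
      qed
      show "\<forall>j. \<forall>t\<in>{0<..T}. \<forall>x\<in>{0<..<1}. ((\<lambda>s. w j s x) has_real_derivative wt j t x) (at t)"
        using W2 by auto
      show "\<forall>j. \<forall>t\<in>{0<..T}. \<forall>x\<in>{0..1}. (w j t has_real_derivative wx j t x) (at x within {0..1})"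
        using W3 by auto
      show "\<forall>j. \<forall>t\<in>{0<..T}. \<forall>x\<in>{0<..<1}. (wx j t has_real_derivative wxx j t x) (at x)"
        using W4 by auto
      show "\<forall>j. \<forall>t\<in>{0<..T}. \<forall>x\<in>{0<..<1}. wt j t x \<ge> d * wxx j t x"
        using W5 by auto
      show "\<forall>j. \<forall>t\<in>{0<..T}. -d * wx j t 0 + \<alpha> * w j t 0 \<ge> \<beta> * sg j t"
        using W6 by auto
      show "\<forall>j. \<forall>t\<in>{0<..T}. d * wx j t 1 + \<alpha> * w j t 1 \<ge> \<beta> * sg (j + 1) t"
        using W7 by auto
      show "\<forall>j. \<forall>t\<in>{0..T}. (sg j has_real_derivative dsg j t) (at t within {0..})"
        using R1 by auto
      show "\<forall>j. \<forall>t\<in>{0<..T}. dsg j t \<ge> Fr j t + \<alpha> * (w j t 0 + w (j - 1) t 1) - 2 * \<beta> * sg j t"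
        using R2 by auto
      show "\<forall>j. \<forall>t\<in>{0..T}. Fr j t \<ge> - L * \<bar>sg j t\<bar>" by (rule Lip)
      show "\<forall>j. \<forall>t\<in>{0..T}. \<forall>x\<in>{0..1}. \<bar>w j t x\<bar> \<le> M \<and> \<bar>sg j t\<bar> \<le> M" by (rule Bd)
      show "\<forall>j. \<forall>x\<in>{0..1}. w j 0 x \<ge> 0" using init_v by (simp add: w_def)
      show "\<forall>j. sg j 0 \<ge> 0" using init_rho by (simp add: sg_def)
    qed
    thus ?thesis using t by (auto simp: T_def)
  qed
  have part1res: "\<forall>t>0. \<forall>j. \<forall>x\<in>{0..1}. vl j t x \<le> vu j t x \<and> rl j t \<le> ru j t"
    using nonneg by (force simp: w_def sg_def)
  have HSj: "HS d \<alpha> (w j) (wt j) (wx j) (wxx j) 0" for j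
    unfolding HS_def
  proof (intro conjI allI impI ballI)
    show "continuous_on ({0..} \<times> {0..1}) (\<lambda>(t,x). w j t x)" by (rule W1)
  next
    fix t x :: real assume "t > 0" "x \<in> {0<..<1}"
    thus "((\<lambda>s. w j s x) has_real_derivative wt j t x) (at t)" by (rule W2)
  next
    fix t x :: real assume "t > 0" "x \<in> {0..1}"
    thus "(w j t has_real_derivative wx j t x) (at x within {0..1})" by (rule W3)
  next
    fix t x :: real assume "t > 0" "x \<in> {0<..<1}"
    thus "(wx j t has_real_derivative wxx j t x) (at x)" by (rule W4)
  next
    fix t x :: real assume "t > 0" "x \<in> {0<..<1}"
    thus "wt j t x \<ge> d * wxx j t x" by (rule W5)
  next
    fix t :: real assume t: "t > 0"
    have "\<beta> * sg j t \<ge> 0" using nonneg[of t j] t b by simp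
    thus "-d * wx j t 0 + \<alpha> * w j t 0 \<ge> 0" using W6[OF t, of j] by linarith
  next
    fix t :: real assume t: "t > 0"
    have "\<beta> * sg (j + 1) t \<ge> 0" using nonneg[of t "j + 1"] t b by simp
    thus "d * wx j t 1 + \<alpha> * w j t 1 \<ge> 0" using W7[OF t, of j] by linarith
  qed
  have AS: "\<forall>t>0. sg j t > 0"
    if h: "sg j 0 > 0 \<or> (\<forall>t>0. w j t 0 > 0) \<or> (\<forall>t>0. w (j - 1) t 1 > 0)" for j
  proof (intro allI impI)
    fix T :: real assume T: "T > 0"
    obtain M L where L0: "L \<ge> 0"
      and FL: "\<forall>j. \<forall>t\<in>{0..T}. \<bar>Fr j t\<bar> \<le> L * \<bar>sg j t\<bar>"
      using bnd[OF T] by blast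
    define q where "q = (\<lambda>t. \<alpha> * (w j t 0 + w (j - 1) t 1))"
    show "sg j T > 0"
    proof (rule rho_pos[OF T, of "sg j" "dsg j" "L + 2 * \<beta>" q])
      show "\<forall>t\<in>{0..T}. (sg j has_real_derivative dsg j t) (at t within {0..})" using R1 by auto
      show "\<forall>t\<in>{0<..T}. dsg j t \<ge> - (L + 2 * \<beta>) * sg j t + q t"
      proof
        fix t assume t: "t \<in> {0<..T}"
        have s0: "sg j t \<ge> 0" using nonneg[of t j] t by auto
        have "\<bar>Fr j t\<bar> \<le> L * \<bar>sg j t\<bar>" using FL t by auto
        hence "Fr j t \<ge> - (L * sg j t)" using s0 by linarith
        thus "dsg j t \<ge> - (L + 2 * \<beta>) * sg j t + q t" using R2[of t j] t
          by (simp add: q_def algebra_simps)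
      qed
      show "\<forall>t\<in>{0<..T}. q t \<ge> 0"
        using nonneg a by (auto simp: q_def)
      show "sg j 0 \<ge> 0" using nonneg[of 0 j] by simp
      show "sg j 0 > 0 \<or> (\<forall>t\<in>{0<..T}. q t > 0)"
      proof (cases "sg j 0 > 0")
        case True thus ?thesis by simp
      next
        case False
        hence h2: "(\<forall>t>0. w j t 0 > 0) \<or> (\<forall>t>0. w (j - 1) t 1 > 0)" using h by simp
        have "\<forall>t\<in>{0<..T}. q t > 0"
        proof
          fix t assume t: "t \<in> {0<..T}"
          have "w j t 0 \<ge> 0" "w (j - 1) t 1 \<ge> 0" using nonneg[of t j] nonneg[of t "j - 1"] t by auto
          moreover have "w j t 0 > 0 \<or> w (j - 1) t 1 > 0" using h2 t by auto
          ultimately have "w j t 0 + w (j - 1) t 1 > 0" by linarith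
          thus "q t > 0" using a by (simp add: q_def)
        qed
        thus ?thesis by simp
      qed
    qed
  qed
  have SA: "\<forall>t>0. \<forall>x\<in>{0..1}. w j t x > 0"
    if h: "(\<forall>t>0. sg j t > 0) \<or> (\<forall>t>0. sg (j + 1) t > 0)" for j
  proof (intro allI impI)
    fix t :: real assume t: "t > 0"
    define t2 where "t2 = t / 2"
    have t2: "t2 > 0" "t2 < t" using t by (auto simp: t2_def)
    have nz: "\<exists>x\<in>{0..1}. w j t2 x > 0"
    proof (rule ccontr)
      assume "\<not> ?thesis"
      hence z: "\<forall>x\<in>{0..1}. w j t2 x = 0" using nonneg[of t2 j] t2 by force
      have d1: "(w j t2 has_real_derivative wx j t2 x) (at x within {0..1})" if "x \<in> {0..1}" for x
        using W3 t2 that by auto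
      have dm: "((\<lambda>y. - w j t2 y) has_real_derivative - wx j t2 x) (at x within {0..1})" if "x \<in> {0..1}" for x
        using d1[OF that] by (rule DERIV_minus)
      have "wx j t2 0 \<ge> 0" by (rule deriv_endpoint_left[OF d1]) (use z in auto)
      moreover have "- wx j t2 0 \<ge> 0" by (rule deriv_endpoint_left[OF dm]) (use z in auto)
      moreover have "wx j t2 1 \<le> 0" by (rule deriv_endpoint_right[OF d1]) (use z in auto)
      moreover have "- wx j t2 1 \<le> 0" by (rule deriv_endpoint_right[OF dm]) (use z in auto)
      ultimately have wx0: "wx j t2 0 = 0" "wx j t2 1 = 0" by linarith+
      have w0: "w j t2 0 = 0" "w j t2 1 = 0" using z by auto
      from h show False
      proof
        assume "\<forall>t>0. sg j t > 0"
        hence "\<beta> * sg j t2 > 0" using t2 b by simp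
        thus False using W6[OF t2(1), of j] wx0 w0 by simp
      next
        assume "\<forall>t>0. sg (j + 1) t > 0"
        hence "\<beta> * sg (j + 1) t2 > 0" using t2 b by simp
        thus False using W7[OF t2(1), of j] wx0 w0 by simp
      qed
    qed
    have hs2: "HS d \<alpha> (w j) (wt j) (wx j) (wxx j) t2" using HS_mono[OF HSj] t2 by simp
    have "\<forall>t'>t2. \<forall>x\<in>{0..1}. w j t' x > 0"
      by (rule start_pos[OF hs2 d a]) (use nonneg[of t2 j] t2 nz in auto)
    thus "\<forall>x\<in>{0..1}. w j t x > 0" using t2 by auto
  qed
  define A where "A = (\<lambda>j. \<forall>t>0. \<forall>x\<in>{0..1}. w j t x > 0)"
  have up: "A (i + 1)" if "A i" for i
  proof -
    have "\<forall>t>0. w ((i + 1) - 1) t 1 > 0" using that by (simp add: A_def)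
    hence "\<forall>t>0. sg (i + 1) t > 0" using AS[of "i + 1"] by simp
    thus ?thesis using SA[of "i + 1"] by (simp add: A_def)
  qed
  have down: "A (i - 1)" if "A i" for i
  proof -
    have "\<forall>t>0. w i t 0 > 0" using that by (simp add: A_def)
    hence "\<forall>t>0. sg i t > 0" using AS[of i] by simp
    hence "\<forall>t>0. sg ((i - 1) + 1) t > 0" by simp
    thus ?thesis using SA[of "i - 1"] by (simp add: A_def)
  qed
  have strict: "\<forall>t>0. \<forall>j. \<forall>x\<in>{0..1}. vl j t x < vu j t x \<and> rl j t < ru j t"
    if hyp: "(\<exists>j. \<exists>x\<in>{0..1}. vl j 0 x \<noteq> vu j 0 x) \<or> (\<exists>j. rl j 0 \<noteq> ru j 0)"
  proof -
    obtain j0 where Aj0: "A j0"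
    proof -
      from hyp show thesis
      proof
        assume "\<exists>j. \<exists>x\<in>{0..1}. vl j 0 x \<noteq> vu j 0 x"
        then obtain j x where jx: "x \<in> {0..1}" "vl j 0 x \<noteq> vu j 0 x" by blast
        moreover have "vl j 0 x \<le> vu j 0 x" using init_v jx(1) by blast
        ultimately have "w j 0 x > 0" by (simp add: w_def)
        hence "\<forall>t>0. \<forall>x\<in>{0..1}. w j t x > 0"
          by (intro start_pos[OF HSj d a]) (use nonneg[of 0 j] jx in auto)
        thus thesis using that[of j] by (simp add: A_def)
      next
        assume "\<exists>j. rl j 0 \<noteq> ru j 0"
        then obtain j where "rl j 0 \<noteq> ru j 0" by blast
        moreover have "rl j 0 \<le> ru j 0" using init_rho by blast
        ultimately have "sg j 0 > 0" by (simp add: sg_def)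
        hence "\<forall>t>0. sg j t > 0" using AS[of j] by simp
        hence "A j" using SA[of j] by (simp add: A_def)
        thus thesis by (rule that)
      qed
    qed
    have allA: "A j" for j
    proof (induct j rule: int_induct[where k = j0])
      case base show ?case by (rule Aj0)
    next
      case (step1 i) thus ?case using up by blast
    next
      case (step2 i) thus ?case using down by blast
    qed
    have allS: "\<forall>t>0. sg j t > 0" for j
      using AS[of j] allA[of j] by (simp add: A_def)
    show ?thesis using allA allS by (force simp: A_def w_def sg_def)
  qed
  show ?thesis using part1res strict by blast
qed

end
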